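(* For every integer $n\ge 0$, $c_{11}(11n+5)\equiv c_{11}(11n+7)\equiv c_{11}(11n+9)\equiv 0\pmod 2$.
   Context: A partition of $n\ge 0$ is a finite multiset of positive integers summing to $n$. For $n\ge 0$, $c_{11}(n)$ denotes the number of pairs $(j,\lambda)$, where $j\ge 1$ is an integer and $\lambda$ is a partition of $n$, such that: each of the odd integers $1,3,\dots,2j-1$ appears in $\lambda$ at least once; odd parts are otherwise unrestricted in multiplicity; every even part of $\lambda$ is greater than $2j$; and the even parts of $\lambda$ are distinct. (A single partition is counted once for each $j$ for which these conditions hold.) *)

theory Defs
  imports Main "HOL-Library.Multiset"
begin

definition is_partition :: "nat \<Rightarrow> nat multiset \<Rightarrow> bool" where
  "is_partition n lam \<longleftrightarrow> (\<forall>p \<in># lam. p > 0) \<and> sum_mset lam = n"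

definition c11_cond :: "nat \<Rightarrow> nat multiset \<Rightarrow> bool" where
  "c11_cond j lam \<longleftrightarrow>
     j \<ge> 1 \<and>
     (\<forall>i \<in> {1..j}. 2 * i - 1 \<in># lam) \<and>
     (\<forall>p \<in># lam. even p \<longrightarrow> p > 2 * j) \<and>
     (\<forall>p \<in># lam. even p \<longrightarrow> count lam p = 1)"

definition c11 :: "nat \<Rightarrow> nat" where
  "c11 n = card {(j, lam). is_partition n lam \<and> c11_cond j lam}"

end

theory Submission
  imports Defs "HOL-Computational_Algebra.Formal_Power_Series" "HOL-Library.Z2"
begin

unbundle fps_syntax

fun gb :: "'a::comm_ring_1 \<Rightarrow> nat \<Rightarrow> nat \<Rightarrow> 'a" where
  "gb q 0 i = (if i = 0 then 1 else 0)"
| "gb q (Suc n) i = (if i = 0 then 1 else gb q n i + q^(Suc n - i) * gb q n (i - 1))"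

lemma gb_above: "n < i \<Longrightarrow> gb q n i = 0"
  by (induction n arbitrary: i) auto

lemma gb_0 [simp]: "gb q n 0 = 1"
  by (cases n) auto

lemma gb_diag [simp]: "gb q n n = 1"
  by (induction n) (auto simp: gb_above)

lemma gb_Q: "1 \<le> i \<Longrightarrow> (1 - q^i) * gb q n i = (1 - q^(Suc n - i)) * gb q n (i - 1)"
proof (induction n arbitrary: i)
  case 0
  then show ?case by (cases "i = 1") auto
next
  case (Suc n)
  show ?case
  proof (cases "i \<le> Suc n")
    case False
    then show ?thesis by (simp add: gb_above)
  next
    case True
    have L: "(1 - q^i) * gb q (Suc n) i = (1 - q^(Suc n)) * gb q n (i - 1)"
    proof (cases "i \<le> n")
      case True
      have "(1 - q^i) * gb q (Suc n) i = (1 - q^i) * gb q n i + (1 - q^i) * q^(Suc n - i) * gb q n (i - 1)"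
        using Suc.prems by (simp add: algebra_simps)
      also have "\<dots> = (1 - q^(Suc n - i)) * gb q n (i - 1) + (1 - q^i) * q^(Suc n - i) * gb q n (i - 1)"
        using Suc.IH[OF Suc.prems] by simp
      also have "\<dots> = (1 - q^i * q^(Suc n - i)) * gb q n (i - 1)"
        by (simp add: algebra_simps)
      also have "q^i * q^(Suc n - i) = q^(Suc n)"
        using True by (simp flip: power_add)
      finally show ?thesis .
    next
      case False
      with \<open>i \<le> Suc n\<close> have i: "i = Suc n" by simp
      show ?thesis using i by (simp add: gb_above)
    qed
    show ?thesis
    proof (cases "i = 1")
      case True
      then show ?thesis using L by simp
    next
      case False
      with Suc.prems have i2: "2 \<le> i" by simp
      define a where "a = Suc (Suc n) - i"
      have e1: "(1 - q^a) * gb q (Suc n) (i - 1)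
          = (1 - q^a) * gb q n (i - 1) + q^a * ((1 - q^a) * gb q n (i - 2))"
        using i2 unfolding a_def by (cases i) (auto simp: algebra_simps)
      have e2: "(1 - q^a) * gb q n (i - 2) = (1 - q^(i - 1)) * gb q n (i - 1)"
        using Suc.IH[of "i - 1"] i2 unfolding a_def by (simp add: Suc_diff_le numeral_2_eq_2)
      have e3: "q^a * q^(i - 1) = q^(Suc n)"
        using True i2 unfolding a_def by (simp flip: power_add)
      have "(1 - q^a) * gb q (Suc n) (i - 1) = (1 - q^a * q^(i - 1)) * gb q n (i - 1)"
        unfolding e1 e2 by (simp add: algebra_simps)
      then show ?thesis using L e3 unfolding a_def by simp
    qed
  qed
qed

lemma gb_R2: "1 \<le> i \<Longrightarrow> gb q (Suc n) i = q^i * gb q n i + gb q n (i - 1)"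
proof -
  assume i: "1 \<le> i"
  have "gb q (Suc n) i = gb q n i + q^(Suc n - i) * gb q n (i - 1)" using i by simp
  moreover have "(1 - q^i) * gb q n i = (1 - q^(Suc n - i)) * gb q n (i - 1)" by (rule gb_Q[OF i])
  ultimately show ?thesis by (simp add: algebra_simps)
qed

fun c2 :: "nat \<Rightarrow> nat" where
  "c2 0 = 0" | "c2 (Suc i) = c2 i + i"

lemma qbin_a: "(\<Prod>k<N. 1 + a * q^k) = (\<Sum>i\<le>N. a^i * q^(c2 i) * gb q N i)"
proof (induction N)
  case 0
  then show ?case by simp
next
  case (Suc N)
  have A: "(\<Sum>i\<le>N. a^i * q^(c2 i) * gb q N i) * (a * q^N)
        = (\<Sum>i\<le>N. a^(Suc i) * q^(c2 (Suc i)) * (q^(Suc N - Suc i) * gb q N i))"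
    unfolding sum_distrib_right
  proof (rule sum.cong[OF refl])
    fix i assume "i \<in> {..N}"
    then have "c2 i + N = c2 (Suc i) + (Suc N - Suc i)" by simp
    then have eq: "q^(c2 i) * q^N = q^(c2 (Suc i)) * q^(Suc N - Suc i)" by (simp only: power_add[symmetric])
    have "a^i * q^(c2 i) * gb q N i * (a * q^N) = a^(Suc i) * (q^(c2 i) * q^N) * gb q N i"
      by (simp only: power_Suc mult_ac)
    also have "\<dots> = a^(Suc i) * (q^(c2 (Suc i)) * q^(Suc N - Suc i)) * gb q N i" by (simp only: eq)
    finally show "a^i * q^(c2 i) * gb q N i * (a * q^N) = a^(Suc i) * q^(c2 (Suc i)) * (q^(Suc N - Suc i) * gb q N i)"
      by (simp only: mult_ac)
  qed
  have B: "(\<Sum>i\<le>Suc N. a^i * q^(c2 i) * gb q N i) = (\<Sum>i\<le>N. a^i * q^(c2 i) * gb q N i)"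
    by (simp add: gb_above)
  have "(\<Sum>i\<le>Suc N. a^i * q^(c2 i) * gb q (Suc N) i)
      = 1 + (\<Sum>i\<le>N. a^(Suc i) * q^(c2 (Suc i)) * gb q (Suc N) (Suc i))"
    by (subst sum.atMost_Suc_shift) simp
  also have "\<dots> = 1 + (\<Sum>i\<le>N. a^(Suc i) * q^(c2 (Suc i)) * gb q N (Suc i))
       + (\<Sum>i\<le>N. a^(Suc i) * q^(c2 (Suc i)) * (q^(Suc N - Suc i) * gb q N i))"
    by (simp add: sum.distrib algebra_simps)
  also have "1 + (\<Sum>i\<le>N. a^(Suc i) * q^(c2 (Suc i)) * gb q N (Suc i))
      = (\<Sum>i\<le>Suc N. a^i * q^(c2 i) * gb q N i)"
    by (simp only: sum.atMost_Suc_shift[of _ N]) simp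
  finally show ?case using A B Suc.IH by (simp add: algebra_simps)
qed

definition Tz :: "int \<Rightarrow> nat" where "Tz d = nat (d * (d + 1) div 2)"

lemma Tz_step: "Tz (d - 1) + nat (d + m) = Tz d + nat m" if "d + m \<ge> 0" "m \<ge> 0"
proof -
  have ev: "even (d * (d + 1))" by simp
  have ev2: "even ((d - 1) * d)" by simp
  have q1: "d * (d + 1) \<ge> 0" by (cases "d \<ge> 0") (auto simp: zero_le_mult_iff)
  have p1: "d * (d + 1) div 2 \<ge> 0" using q1 by simp
  have q2: "(d - 1) * d \<ge> 0" by (cases "d \<ge> 1") (auto simp: zero_le_mult_iff)
  have p2: "(d - 1) * d div 2 \<ge> 0" using q2 by simp
  have "(d - 1) * d div 2 + (d + m) = d * (d + 1) div 2 + m"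
    using ev ev2 by (auto elim!: evenE simp: algebra_simps)
  then show ?thesis using p1 p2 that unfolding Tz_def by (simp add: nat_add_distrib[symmetric] algebra_simps)
qed

lemma prod_1n: "(\<Prod>k\<in>{1..n}. f k) = (\<Prod>k<n. f (Suc k))"
  by (induction n) (auto simp: prod.cl_ivl_Suc)

lemma c2_closed: "2 * c2 i + i = i * i"
  by (induction i) simp_all

lemma c2_Tz: "c2 i + i = Tz (int i)"
proof -
  have "2 * (c2 i + i) = i * i + i" using c2_closed[of i] by simp
  then have "2 * int (c2 i + i) = int i * (int i + 1)"
    by (metis distrib_left mult.commute mult.right_neutral of_nat_add of_nat_mult of_nat_numeral of_nat_1)
  then have "int (c2 i + i) = int i * (int i + 1) div 2"
    by (metis nonzero_mult_div_cancel_left zero_neq_numeral)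
  then show ?thesis unfolding Tz_def by simp
qed

lemma jtp_fin:
  "(\<Prod>k\<in>{1..n}. 1 + z * q^k) * (\<Prod>k<m. z + q^k)
     = (\<Sum>i\<le>n+m. z^i * q^(Tz (int i - int m)) * gb q (n+m) i)"
proof (induction m)
  case 0
  have "(\<Prod>k\<in>{1..n}. 1 + z * q^k) = (\<Prod>k<n. 1 + (z * q) * q^k)"
    unfolding prod_1n by (simp add: mult.assoc)
  also have "\<dots> = (\<Sum>i\<le>n. (z*q)^i * q^(c2 i) * gb q n i)" by (rule qbin_a)
  also have "\<dots> = (\<Sum>i\<le>n. z^i * q^(Tz (int i)) * gb q n i)"
  proof (rule sum.cong[OF refl])
    fix i
    have "(z*q)^i * q^(c2 i) = z^i * q^(c2 i + i)" by (simp add: power_mult_distrib power_add mult.commute)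
    then show "(z*q)^i * q^(c2 i) * gb q n i = z^i * q^(Tz (int i)) * gb q n i" by (simp add: c2_Tz)
  qed
  finally show ?case by simp
next
  case (Suc m)
  define N where "N = n + m"
  have IH: "(\<Prod>k\<in>{1..n}. 1 + z * q^k) * (\<Prod>k<m. z + q^k)
     = (\<Sum>i\<le>N. z^i * q^(Tz (int i - int m)) * gb q N i)" using Suc.IH unfolding N_def .
  have ex: "Tz (int i - int m - 1) + i = Tz (int i - int m) + m" for i
    using Tz_step[of "int i - int m" "int m"] by simp
  have ex2: "Tz (int (Suc i) - int m - 1) = Tz (int i - int m)" for i by simp
  define S1 where "S1 = (\<Sum>i\<le>N. z^(Suc i) * q^(Tz (int i - int m)) * gb q N i)"
  define S2 where "S2 = (\<Sum>i\<le>N. z^(Suc i) * q^(Tz (int i - int m) + Suc i) * gb q N (Suc i))"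
  have "(\<Prod>k\<in>{1..n}. 1 + z * q^k) * (\<Prod>k<Suc m. z + q^k)
      = (\<Sum>i\<le>N. z^i * q^(Tz (int i - int m)) * gb q N i) * (z + q^m)"
    unfolding prod.lessThan_Suc IH[symmetric] by (simp only: mult.assoc)
  also have "\<dots> = S1 + (\<Sum>i\<le>N. z^i * q^(Tz (int i - int m) + m) * gb q N i)"
    unfolding S1_def distrib_left sum_distrib_right by (simp add: sum.distrib power_add mult_ac)
  also have "(\<Sum>i\<le>N. z^i * q^(Tz (int i - int m) + m) * gb q N i)
      = (\<Sum>i\<le>Suc N. z^i * q^(Tz (int i - int m - 1) + i) * gb q N i)"
    by (simp add: ex gb_above)
  also have "\<dots> = q^(Tz (- int m - 1)) + S2"
    unfolding S2_def by (simp only: sum.atMost_Suc_shift[of _ N] ex2) simp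
  finally have L: "(\<Prod>k\<in>{1..n}. 1 + z * q^k) * (\<Prod>k<Suc m. z + q^k)
     = q^(Tz (- int m - 1)) + S2 + S1"
    by (simp add: ac_simps)
  have "(\<Sum>i\<le>n + Suc m. z^i * q^(Tz (int i - int (Suc m))) * gb q (n + Suc m) i)
      = (\<Sum>i\<le>Suc N. z^i * q^(Tz (int i - int m - 1)) * gb q (Suc N) i)"
    unfolding N_def by (simp add: algebra_simps)
  also have "\<dots> = q^(Tz (- int m - 1)) + (\<Sum>i\<le>N. z^(Suc i) * q^(Tz (int i - int m)) * gb q (Suc N) (Suc i))"
    by (simp only: sum.atMost_Suc_shift[of _ N] ex2) simp
  also have "(\<Sum>i\<le>N. z^(Suc i) * q^(Tz (int i - int m)) * gb q (Suc N) (Suc i)) = S2 + S1"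
    unfolding S1_def S2_def sum.distrib[symmetric]
  proof (rule sum.cong[OF refl])
    fix i
    have "gb q (Suc N) (Suc i) = q^(Suc i) * gb q N (Suc i) + gb q N i"
      using gb_R2[of "Suc i" q N] by simp
    then show "z^(Suc i) * q^(Tz (int i - int m)) * gb q (Suc N) (Suc i)
       = z^(Suc i) * q^(Tz (int i - int m) + Suc i) * gb q N (Suc i) + z^(Suc i) * q^(Tz (int i - int m)) * gb q N i"
      by (simp only: power_add distrib_left mult_ac)
  qed
  finally show ?case using L by (simp add: ac_simps)
qed

definition Pq :: "'a::comm_ring_1 \<Rightarrow> nat \<Rightarrow> 'a" where
  "Pq q i = (\<Prod>k\<in>{1..i}. 1 - q^k)"

lemma Pq_0 [simp]: "Pq q 0 = 1" by (simp add: Pq_def)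

lemma Pq_Suc: "Pq q (Suc i) = Pq q i * (1 - q^(Suc i))"
  by (simp add: Pq_def prod.cl_ivl_Suc)

lemma Pq_mono: "a \<le> b \<Longrightarrow> q^(Suc a) dvd (Pq q b - Pq q a)"
proof (induction b)
  case 0 then show ?case by simp
next
  case (Suc b)
  show ?case
  proof (cases "a = Suc b")
    case True then show ?thesis by simp
  next
    case False
    with Suc.prems have ab: "a \<le> b" by simp
    have eq: "Pq q (Suc b) - Pq q a = (Pq q b - Pq q a) - q^(Suc b) * Pq q b"
      by (simp add: Pq_Suc algebra_simps)
    have h: "q^(Suc a) dvd q^(Suc b) * Pq q b"
      using ab by (intro dvd_mult2 le_imp_power_dvd) simp
    show ?thesis unfolding eq using Suc.IH[OF ab] h by (rule dvd_diff)
  qed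
qed

lemma gb_T1: "i \<le> N \<Longrightarrow> q^(Suc N - i) dvd (Pq q i * gb q N i - 1)"
proof (induction N arbitrary: i)
  case 0 then show ?case by simp
next
  case (Suc N)
  show ?case
  proof (cases "i = 0")
    case True then show ?thesis by simp
  next
    case False
    then obtain j where j: "i = Suc j" by (cases i) auto
    have eq: "Pq q i * gb q (Suc N) i - 1
        = q^i * (Pq q i * gb q N i - 1) + (1 - q^i) * (Pq q j * gb q N j - 1)"
      using gb_R2[of i q N] j by (simp add: Pq_Suc algebra_simps)
    have d1: "q^(Suc (Suc N) - i) dvd q^i * (Pq q i * gb q N i - 1)"
    proof (cases "i \<le> N")
      case True
      have "q^(Suc (Suc N) - i) dvd q^i * q^(Suc N - i)"
        unfolding power_add[symmetric] using True j by (intro le_imp_power_dvd) simp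
      also have "\<dots> dvd q^i * (Pq q i * gb q N i - 1)"
        using Suc.IH[OF True] by (rule mult_dvd_mono[OF dvd_refl])
      finally show ?thesis .
    next
      case False
      then have "q^(Suc (Suc N) - i) dvd q^i" using Suc.prems by (intro le_imp_power_dvd) simp
      then show ?thesis by (rule dvd_mult2)
    qed
    have d2: "q^(Suc (Suc N) - i) dvd (1 - q^i) * (Pq q j * gb q N j - 1)"
      using Suc.IH[of j] Suc.prems j by (intro dvd_mult) simp
    show ?thesis unfolding eq using d1 d2 by (rule dvd_add)
  qed
qed

lemma gb_T2: "i \<le> N \<Longrightarrow> q^(Suc i) dvd (Pq q (N - i) * gb q N i - 1)"
proof (induction N arbitrary: i)
  case 0 then show ?case by simp
next
  case (Suc N)
  show ?case
  proof (cases "i = Suc N")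
    case True then show ?thesis by simp
  next
    case False
    with Suc.prems have iN: "i \<le> N" by simp
    show ?thesis
    proof (cases "i = 0")
      case True
      have "q^(Suc 0) dvd (Pq q (Suc N) - Pq q 0)" by (rule Pq_mono) simp
      then show ?thesis using True by simp
    next
      case False
      then obtain j where j: "i = Suc j" by (cases i) auto
      define b where "b = N - i"
      have a1: "Suc N - i = Suc b" and a2: "N - j = Suc b" using iN j unfolding b_def by auto
      have gs: "gb q (Suc N) i = gb q N i + q^(Suc b) * gb q N j"
        using j a1 by simp
      have eq: "Pq q (Suc N - i) * gb q (Suc N) i - 1
        = (1 - q^(Suc b)) * (Pq q b * gb q N i - 1) + q^(Suc b) * (Pq q (Suc b) * gb q N j - 1)"
        unfolding a1 gs by (simp add: Pq_Suc algebra_simps)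
      have d1: "q^(Suc i) dvd (1 - q^(Suc b)) * (Pq q b * gb q N i - 1)"
        using Suc.IH[OF iN] unfolding b_def by (rule dvd_mult)
      have "q^(Suc i) dvd q^(Suc b) * q^(Suc j)"
        unfolding power_add[symmetric] b_def using iN j by (intro le_imp_power_dvd) simp
      also have "\<dots> dvd q^(Suc b) * (Pq q (Suc b) * gb q N j - 1)"
        using Suc.IH[of j] iN j a2 by (intro mult_dvd_mono) simp_all
      finally have d2: "q^(Suc i) dvd q^(Suc b) * (Pq q (Suc b) * gb q N j - 1)" .
      show ?thesis unfolding eq using d1 d2 by (rule dvd_add)
    qed
  qed
qed

lemma dvd_sub_helper:
  fixes d A B C g :: "'a::comm_ring_1"
  assumes "d dvd (A * g - 1)" "d dvd ((A - C) * g)"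
  shows "d dvd (C * g - 1)"
proof -
  have e: "C * g - 1 = (A * g - 1) - (A - C) * g" by (simp add: algebra_simps)
  show ?thesis unfolding e using assms by (rule dvd_diff)
qed

lemma gb_trunc: "i \<le> 2*N \<Longrightarrow> q^(Suc (min i (2*N - i))) dvd (Pq q N * gb q (2*N) i - 1)"
proof (cases "i \<le> N")
  case True
  have m: "min i (2*N - i) = i" using True by simp
  have t: "q^(Suc i) dvd (Pq q (2*N - i) * gb q (2*N) i - 1)" using True gb_T2[of i "2*N" q] by simp
  have p: "q^(Suc N) dvd (Pq q (2*N - i) - Pq q N)" using True Pq_mono[of N "2*N - i" q] by simp
  have "q^(Suc i) dvd q^(Suc N)" using True by (intro le_imp_power_dvd) simp
  then have "q^(Suc i) dvd (Pq q (2*N - i) - Pq q N)" using p by (rule dvd_trans)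
  then have "q^(Suc i) dvd (Pq q (2*N - i) - Pq q N) * gb q (2*N) i" by (rule dvd_mult2)
  then show ?thesis unfolding m by (rule dvd_sub_helper[OF t])
next
  case False
  assume i2: "i \<le> 2*N"
  have m: "Suc (min i (2*N - i)) = Suc (2*N) - i" using False i2 by simp
  have t: "q^(Suc (2*N) - i) dvd (Pq q i * gb q (2*N) i - 1)" using i2 by (intro gb_T1)
  have p: "q^(Suc N) dvd (Pq q i - Pq q N)" using False Pq_mono[of N i q] by simp
  have "q^(Suc (2*N) - i) dvd q^(Suc N)" using False by (simp add: le_imp_power_dvd)
  then have "q^(Suc (2*N) - i) dvd (Pq q i - Pq q N)" using p by (rule dvd_trans)
  then have "q^(Suc (2*N) - i) dvd (Pq q i - Pq q N) * gb q (2*N) i" by (rule dvd_mult2)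
  then show ?thesis unfolding m by (rule dvd_sub_helper[OF t])
qed


declare add_bit_eq_xor [simp del] mult_bit_eq_and [simp del]

type_synonym bf = "bit fps"

lemma bit_add_self [simp]: "(x::bit) + x = 0"
  by (cases x) simp_all

lemma bit_add_eq0: "(a::bit) + b = 0 \<longleftrightarrow> a = b"
  by (cases a; cases b) simp_all

lemma bf_two [simp]: "(2::bf) = 0"
  by (simp add: fps_eq_iff fps_numeral_nth)

lemma bf_add_self [simp]: "(f::bf) + f = 0"
  by (metis mult_2 bf_two mult_zero_left)

lemma bf_uminus [simp]: "- (f::bf) = f"
  by (simp add: fps_eq_iff)

lemma bf_minus: "(f::bf) - g = f + g"
  by (simp add: fps_eq_iff)

lemma bf_sq: "((f::bf) + g)^2 = f^2 + g^2"
proof -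
  have "(f + g)^2 = f^2 + g^2 + (f*g + f*g)" by (simp add: power2_eq_square algebra_simps del: bf_add_self)
  then show ?thesis by simp
qed

lemma bf_sq_sum: "finite S \<Longrightarrow> (\<Sum>i\<in>S. (f i :: bf))^2 = (\<Sum>i\<in>S. (f i)^2)"
  by (induction S rule: finite_induct) (simp_all add: bf_sq)

lemma bf_sq_prod: "(\<Prod>i\<in>S. (f i :: bf))^2 = (\<Prod>i\<in>S. (f i)^2)"
  by (simp add: power2_eq_square prod.distrib)

definition cg :: "nat \<Rightarrow> bf \<Rightarrow> bf \<Rightarrow> bool" where
  "cg K f g \<longleftrightarrow> fps_X^K dvd (f - g)"

lemma cg_refl [simp]: "cg K f f" by (simp add: cg_def)
lemma cg_sym: "cg K f g \<Longrightarrow> cg K g f" by (simp add: cg_def bf_minus add.commute)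
lemma cg_trans: "cg K f g \<Longrightarrow> cg K g h \<Longrightarrow> cg K f h"
proof -
  assume "cg K f g" "cg K g h"
  then have "fps_X^K dvd (f - g) + (g - h)" unfolding cg_def by (rule dvd_add)
  then show ?thesis by (simp add: cg_def bf_minus)
qed
lemma cg_add: "cg K f g \<Longrightarrow> cg K f' g' \<Longrightarrow> cg K (f + f') (g + g')"
proof -
  assume "cg K f g" "cg K f' g'"
  then have "fps_X^K dvd (f - g) + (f' - g')" unfolding cg_def by (rule dvd_add)
  then show ?thesis by (simp add: cg_def algebra_simps)
qed
lemma cg_mult: "cg K f g \<Longrightarrow> cg K f' g' \<Longrightarrow> cg K (f * f') (g * g')"
proof -
  assume a: "cg K f g" "cg K f' g'"
  have e: "f * f' - g * g' = (f - g) * f' + g * (f' - g')" by (simp add: algebra_simps)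
  have "fps_X^K dvd (f - g) * f' + g * (f' - g')"
    using a unfolding cg_def by (intro dvd_add dvd_mult dvd_mult2)
  then show ?thesis unfolding cg_def e .
qed
lemma cg_mono: "cg K f g \<Longrightarrow> K' \<le> K \<Longrightarrow> cg K' f g"
  unfolding cg_def by (meson dvd_trans le_imp_power_dvd)
lemma cg_nth: "cg K f g \<Longrightarrow> i < K \<Longrightarrow> f $ i = g $ i"
proof -
  assume "cg K f g" "i < K"
  then obtain h where h: "f - g = fps_X^K * h" unfolding cg_def by (auto elim: dvdE)
  have "(f - g) $ i = 0" unfolding h using \<open>i < K\<close> by (simp add: fps_X_power_mult_nth)
  then have "f $ i + g $ i = 0" by (simp add: bf_minus del: add_bit_eq_xor)
  then show ?thesis by (simp only: bit_add_eq0)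
qed
lemma cg_dvd: "fps_X^K dvd (f - g) \<Longrightarrow> cg K f g" by (simp add: cg_def)

lemma cg_sum: "(\<And>i. i \<in> S \<Longrightarrow> cg K (f i) (g i)) \<Longrightarrow> cg K (\<Sum>i\<in>S. f i) (\<Sum>i\<in>S. g i)"
  by (induction S rule: infinite_finite_induct) (auto intro: cg_add)

lemma cg_prod: "(\<And>i. i \<in> S \<Longrightarrow> cg K (f i) (g i)) \<Longrightarrow> cg K (\<Prod>i\<in>S. f i) (\<Prod>i\<in>S. g i)"
  by (induction S rule: infinite_finite_induct) (auto intro: cg_mult)

lemma cg_sq: "cg K f g \<Longrightarrow> cg (2*K) (f^2) (g^2)"
proof -
  assume "cg K f g"
  then obtain h where h: "f - g = fps_X^K * h" unfolding cg_def by (auto elim: dvdE)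
  have "f^2 - g^2 = (f - g)^2" by (simp add: bf_minus bf_sq)
  also have "\<dots> = fps_X^(2*K) * h^2" unfolding h by (simp add: power_mult_distrib power_mult mult.commute)
  finally show ?thesis unfolding cg_def by simp
qed

lemma cg_shift: "cg (M + K) (fps_X^M * f) (fps_X^M * g) \<Longrightarrow> cg K f g"
proof -
  assume "cg (M + K) (fps_X^M * f) (fps_X^M * g)"
  then have "fps_X^M * fps_X^K dvd fps_X^M * (f - g)" unfolding cg_def by (simp add: power_add algebra_simps)
  then show ?thesis unfolding cg_def by simp
qed

lemma cg_Xmult: "cg K f g \<Longrightarrow> cg (M + K) (fps_X^M * f) (fps_X^M * g)"
proof -
  assume "cg K f g"
  then have "fps_X^M * fps_X^K dvd fps_X^M * (f - g)" unfolding cg_def by simp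
  then show ?thesis unfolding cg_def by (simp add: power_add algebra_simps)
qed

definition PX :: "nat set \<Rightarrow> bf" where "PX S = (\<Prod>k\<in>S. 1 + fps_X^k)"

lemma PX_union: "finite A \<Longrightarrow> finite B \<Longrightarrow> A \<inter> B = {} \<Longrightarrow> PX (A \<union> B) = PX A * PX B"
  unfolding PX_def by (rule prod.union_disjoint)

lemma PX_image: "inj_on f A \<Longrightarrow> PX (f ` A) = (\<Prod>k\<in>A. 1 + fps_X^(f k))"
  unfolding PX_def by (simp add: prod.reindex)

lemma PX_high: "finite A \<Longrightarrow> \<forall>k\<in>A. K \<le> k \<Longrightarrow> cg K (PX A) 1"
  unfolding PX_def
proof -
  assume "finite A" "\<forall>k\<in>A. K \<le> k"
  have "cg K (\<Prod>k\<in>A. 1 + fps_X^k) (\<Prod>k\<in>A. 1)"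
  proof (rule cg_prod)
    fix k assume "k \<in> A"
    then have "K \<le> k" using \<open>\<forall>k\<in>A. K \<le> k\<close> by simp
    then have "fps_X^K dvd (fps_X^k :: bf)" by (rule le_imp_power_dvd)
    then show "cg K (1 + fps_X^k) 1" by (simp add: cg_def)
  qed
  then show "cg K (\<Prod>k\<in>A. 1 + fps_X^k) 1" by simp
qed

lemma PX_trunc:
  assumes "finite A" "finite B" "A \<inter> {..<K} = B \<inter> {..<K}"
  shows "cg K (PX A) (PX B)"
proof -
  have a: "PX A = PX (A \<inter> {..<K}) * PX (A - {..<K})"
    using assms by (subst PX_union[symmetric]) (auto intro: arg_cong[where f=PX])
  have b: "PX B = PX (B \<inter> {..<K}) * PX (B - {..<K})"
    using assms by (subst PX_union[symmetric]) (auto intro: arg_cong[where f=PX])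
  have "cg K (PX (A \<inter> {..<K}) * PX (A - {..<K})) (PX (A \<inter> {..<K}) * 1)"
    using assms by (intro cg_mult cg_refl PX_high) auto
  moreover have "cg K (PX (B \<inter> {..<K}) * PX (B - {..<K})) (PX (B \<inter> {..<K}) * 1)"
    using assms by (intro cg_mult cg_refl PX_high) auto
  ultimately show ?thesis unfolding a b using assms(3) by (auto intro: cg_trans cg_sym)
qed

lemma PX_nth0 [simp]: "0 \<notin> A \<Longrightarrow> PX A $ 0 = 1"
  unfolding PX_def
  by (induction A rule: infinite_finite_induct) (auto simp: fps_mult_nth)


lemma Tz_ge: "int (Tz d) \<ge> \<bar>d\<bar> - 1"
proof -
  have ev: "even (d * (d + 1))" by simp
  have "d * (d + 1) \<ge> 2 * \<bar>d\<bar> - 2"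
  proof (cases "d \<ge> 0")
    case True
    have "d * d \<ge> d"
    proof (cases "d = 0")
      case False
      then have "1 \<le> d" using True by simp
      then have "1 * d \<le> d * d" by (intro mult_right_mono) simp_all
      then show ?thesis by simp
    qed simp
    then show ?thesis using True by (simp add: algebra_simps)
  next
    case False
    have "(d + 1) * (d + 2) \<ge> 0"
    proof (cases "d = -1")
      case True then show ?thesis by simp
    next
      case False2: False
      then have "d + 1 \<le> 0" "d + 2 \<le> 0" using False by auto
      then show ?thesis by (simp add: mult_nonpos_nonpos)
    qed
    then show ?thesis using False by (simp add: algebra_simps)
  qed
  moreover have "d * (d + 1) div 2 * 2 = d * (d + 1)" using ev by simp
  moreover have "d * (d + 1) \<ge> 0"
    by (cases "d \<ge> 0") (auto simp: zero_le_mult_iff)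
  ultimately show ?thesis unfolding Tz_def by simp
qed

lemma Tz_min_bound:
  assumes "i \<le> 2 * N"
  shows "N \<le> Tz (int i - int N) + min i (2 * N - i) + 1"
proof -
  have t: "int (Tz (int i - int N)) \<ge> \<bar>int i - int N\<bar> - 1" by (rule Tz_ge)
  have "int (min i (2 * N - i)) = int N - \<bar>int i - int N\<bar>" using assms by auto
  then show ?thesis using t by linarith
qed

lemma Pq_bf: "0 < c \<Longrightarrow> Pq (fps_X^c :: bf) j = PX ((\<lambda>k. c * k) ` {1..j})"
  unfolding Pq_def by (subst PX_image) (auto simp: inj_on_def bf_minus power_mult)

lemma jtp_cong:
  fixes c M K :: nat
  defines "N \<equiv> Suc M"
  assumes MK: "M + K \<le> c * N"
  shows "cg (M + K)
     ((\<Prod>k\<in>{1..N}. 1 + fps_X * (fps_X^c)^k) * (\<Prod>k<N. fps_X + (fps_X^c)^k) * Pq (fps_X^c :: bf) N)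
     (\<Sum>i\<le>2*N. fps_X^(i + c * Tz (int i - int N)))"
proof -
  let ?q = "fps_X^c :: bf"
  have "(\<Prod>k\<in>{1..N}. 1 + fps_X * ?q^k) * (\<Prod>k<N. fps_X + ?q^k) * Pq ?q N
      = (\<Sum>i\<le>2*N. fps_X^i * ?q^(Tz (int i - int N)) * gb ?q (2*N) i) * Pq ?q N"
    using jtp_fin[where n=N and m=N and z="fps_X :: bf" and q="?q"] by (simp add: mult_2)
  also have "\<dots> = (\<Sum>i\<le>2*N. fps_X^(i + c * Tz (int i - int N)) * (Pq ?q N * gb ?q (2*N) i))"
    unfolding sum_distrib_right by (rule sum.cong) (simp_all add: power_add power_mult mult_ac)
  finally have e: "(\<Prod>k\<in>{1..N}. 1 + fps_X * ?q^k) * (\<Prod>k<N. fps_X + ?q^k) * Pq ?q N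
      = (\<Sum>i\<le>2*N. fps_X^(i + c * Tz (int i - int N)) * (Pq ?q N * gb ?q (2*N) i))" .
  have "cg (M + K) (\<Sum>i\<le>2*N. fps_X^(i + c * Tz (int i - int N)) * (Pq ?q N * gb ?q (2*N) i))
          (\<Sum>i\<le>2*N. fps_X^(i + c * Tz (int i - int N)))"
  proof (rule cg_sum)
    fix i assume "i \<in> {..2*N}"
    then have i: "i \<le> 2 * N" by simp
    let ?E = "i + c * Tz (int i - int N)"
    have d: "?q^(Suc (min i (2*N - i))) dvd (Pq ?q N * gb ?q (2*N) i - 1)"
      using gb_trunc[OF i] .
    have "N \<le> Tz (int i - int N) + Suc (min i (2 * N - i))" using Tz_min_bound[OF i] by simp
    then have "c * N \<le> c * (Tz (int i - int N) + Suc (min i (2 * N - i)))" by (rule mult_left_mono) simp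
    then have le: "M + K \<le> ?E + c * Suc (min i (2*N - i))" using MK by (simp add: algebra_simps)
    have "(fps_X :: bf)^(M + K) dvd fps_X^(?E + c * Suc (min i (2*N - i)))"
      using le by (rule le_imp_power_dvd)
    also have "\<dots> = fps_X^?E * ?q^(Suc (min i (2*N - i)))" by (simp add: power_add power_mult)
    also have "\<dots> dvd fps_X^?E * (Pq ?q N * gb ?q (2*N) i - 1)" using d by (rule mult_dvd_mono[OF dvd_refl])
    finally show "cg (M + K) (fps_X^?E * (Pq ?q N * gb ?q (2*N) i)) (fps_X^?E)"
      unfolding cg_def by (simp add: algebra_simps)
  qed
  then show ?thesis unfolding e .
qed


definition Uc :: "nat \<Rightarrow> nat \<Rightarrow> nat set" where
  "Uc c M = {1} \<union> (\<lambda>k. c*k + 1) ` {1..Suc M} \<union> (\<lambda>k. c*k + (c - 1)) ` {..<M} \<union> (\<lambda>k. c*k) ` {1..Suc M}"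

lemma mod_helper: "(r::nat) < c \<Longrightarrow> (c*b + r) mod c = r"
proof -
  assume "r < c"
  have "(r + b * c) mod c = r mod c" by (rule mod_mult_self1)
  then show ?thesis using \<open>r < c\<close> by (simp add: mult.commute add.commute)
qed

lemma PX_union4:
  assumes "finite A" "finite B" "finite C" "finite D"
    "A \<inter> B = {}" "A \<inter> C = {}" "A \<inter> D = {}" "B \<inter> C = {}" "B \<inter> D = {}" "C \<inter> D = {}"
  shows "PX (A \<union> B \<union> C \<union> D) = PX A * PX B * PX C * PX D"
  using assms by (simp add: PX_union Int_Un_distrib Int_Un_distrib2)

lemma jtp_lhs:
  assumes c: "3 \<le> c"
  shows "(\<Prod>k\<in>{1..Suc M}. 1 + fps_X * (fps_X^c)^k) * (\<Prod>k<Suc M. fps_X + (fps_X^c)^k) * Pq (fps_X^c :: bf) (Suc M)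
     = fps_X^M * PX (Uc c M)"
proof -
  have inj1: "inj_on (\<lambda>k. c*k + 1) A" for A using c by (auto simp: inj_on_def)
  have inj2: "inj_on (\<lambda>k. c*k + (c - 1)) A" for A
  proof (rule inj_onI)
    fix x y assume "c*x + (c - 1) = c*y + (c - 1)"
    then have "c*x = c*y" by (simp only: add_right_cancel)
    then show "x = y" using c by simp
  qed
  have inj0: "inj_on (\<lambda>k. c*k) A" for A using c by (auto simp: inj_on_def)
  have p1: "(\<Prod>k\<in>{1..Suc M}. 1 + fps_X * (fps_X^c)^k) = PX ((\<lambda>k. c*k + 1) ` {1..Suc M})"
  proof (subst PX_image[OF inj1], rule prod.cong[OF refl])
    fix k
    have "(fps_X^c :: bf)^k = fps_X^(c*k)" by (simp add: power_mult)
    then show "1 + fps_X * (fps_X^c)^k = 1 + (fps_X :: bf)^(c*k + 1)" by (simp add: power_add mult.commute)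
  qed
  have p0: "Pq (fps_X^c :: bf) (Suc M) = PX ((\<lambda>k. c*k) ` {1..Suc M})"
    using c by (intro Pq_bf) simp
  have "(\<Prod>k<Suc M. fps_X + (fps_X^c)^k) = (fps_X + 1) * (\<Prod>k<M. fps_X + (fps_X^c :: bf)^(Suc k))"
    by (simp only: prod.lessThan_Suc_shift) simp
  also have "(\<Prod>k<M. fps_X + (fps_X^c :: bf)^(Suc k)) = (\<Prod>k<M. fps_X * (1 + fps_X^(c*k + (c - 1))))"
  proof (rule prod.cong[OF refl])
    fix k
    have eq: "c * Suc k = Suc (c*k + (c - 1))" using c by (simp add: algebra_simps)
    have "(fps_X^c :: bf)^(Suc k) = fps_X^(c * Suc k)" by (simp only: power_mult)
    also have "\<dots> = fps_X * fps_X^(c*k + (c - 1))" unfolding eq by simp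
    finally show "fps_X + (fps_X^c :: bf)^(Suc k) = fps_X * (1 + fps_X^(c*k + (c - 1)))"
      by (simp add: algebra_simps)
  qed
  also have "\<dots> = fps_X^M * PX ((\<lambda>k. c*k + (c - 1)) ` {..<M})"
    by (subst PX_image[OF inj2]) (simp add: prod.distrib)
  finally have p2: "(\<Prod>k<Suc M. fps_X + (fps_X^c :: bf)^k) = PX {1} * (fps_X^M * PX ((\<lambda>k. c*k + (c - 1)) ` {..<M}))"
    by (simp add: PX_def add.commute)
  have "PX (Uc c M) = PX {1} * PX ((\<lambda>k. c*k + 1) ` {1..Suc M}) * PX ((\<lambda>k. c*k + (c - 1)) ` {..<M}) * PX ((\<lambda>k. c*k) ` {1..Suc M})"
    unfolding Uc_def
  proof (rule PX_union4)
    show "{1} \<inter> (\<lambda>k. c*k + 1) ` {1..Suc M} = {}" using c by auto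
    show "{1} \<inter> (\<lambda>k. c*k + (c - 1)) ` {..<M} = {}" using c by auto
    show "{1} \<inter> (\<lambda>k. c*k) ` {1..Suc M} = {}" using c by (auto simp: mult_eq_1_iff)
    show "(\<lambda>k. c*k + 1) ` {1..Suc M} \<inter> (\<lambda>k. c*k + (c - 1)) ` {..<M} = {}"
    proof (rule ccontr)
      assume "\<not> ?thesis"
      then obtain a b where "c*a + 1 = c*b + (c - 1)" by auto
      then have "(c*a + 1) mod c = (c*b + (c - 1)) mod c" by simp
      moreover have "(c*a + 1) mod c = 1" using c by (intro mod_helper) simp
      moreover have "(c*b + (c - 1)) mod c = c - 1" using c by (intro mod_helper) simp
      ultimately show False using c by simp
    qed
    show "(\<lambda>k. c*k + 1) ` {1..Suc M} \<inter> (\<lambda>k. c*k) ` {1..Suc M} = {}"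
    proof (rule ccontr)
      assume "\<not> ?thesis"
      then obtain a b where "c*a + 1 = c*b" by auto
      then have "(c*a + 1) mod c = (c*b) mod c" by simp
      moreover have "(c*a + 1) mod c = 1" using c by (intro mod_helper) simp
      ultimately show False using c by simp
    qed
    show "(\<lambda>k. c*k + (c - 1)) ` {..<M} \<inter> (\<lambda>k. c*k) ` {1..Suc M} = {}"
    proof (rule ccontr)
      assume "\<not> ?thesis"
      then obtain a b where "c*a + (c - 1) = c*b" by auto
      then have "(c*a + (c - 1)) mod c = (c*b) mod c" by simp
      moreover have "(c*a + (c - 1)) mod c = c - 1" using c by (intro mod_helper) simp
      ultimately show False using c by simp
    qed
  qed auto
  then show ?thesis unfolding p1 p0 p2 by (simp add: mult_ac)
qed


lemma one_X_sq: "(1 + fps_X^k :: bf)^2 = 1 + fps_X^(2*k)"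
  by (simp add: bf_sq power_mult[symmetric] mult.commute)

lemma PX_dbl: "PX ((\<lambda>k. 2*k) ` {1..m}) = (PX {1..m})^2"
proof -
  have "PX ((\<lambda>k. 2*k) ` {1..m}) = (\<Prod>k\<in>{1..m}. (1 + fps_X^k)^2)"
    by (subst PX_image) (auto simp: inj_on_def one_X_sq)
  then show ?thesis by (simp add: PX_def bf_sq_prod)
qed

lemma PX_quad: "PX ((\<lambda>k. 4*k) ` {1..m}) = (PX {1..m})^4"
proof -
  have "PX ((\<lambda>k. 4*k) ` {1..m}) = PX ((\<lambda>k. 2*k) ` ((\<lambda>k. 2*k) ` {1..m}))"
    by (simp add: image_image)
  also have "\<dots> = (\<Prod>k\<in>(\<lambda>k. 2*k) ` {1..m}. (1 + fps_X^k)^2)"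
    by (subst PX_image) (auto simp: inj_on_def one_X_sq)
  also have "\<dots> = (PX ((\<lambda>k. 2*k) ` {1..m}))^2" by (simp add: PX_def bf_sq_prod)
  also have "\<dots> = (PX {1..m})^4" unfolding PX_dbl by (simp flip: power_mult)
  finally show ?thesis .
qed

definition Phi :: "nat \<Rightarrow> bf" where "Phi n = PX {1..n}"
definition Od :: "nat \<Rightarrow> nat set" where "Od n = {k\<in>{1..n}. odd k}"
definition Evn :: "nat \<Rightarrow> nat set" where "Evn n = {k\<in>{1..n}. even k}"
definition F4 :: "nat \<Rightarrow> nat set" where "F4 n = {k\<in>{1..n}. 4 dvd k}"

lemma Evn_img: "Evn n = (\<lambda>k. 2*k) ` {1..n div 2}"
  unfolding Evn_def by (auto elim!: dvdE intro!: image_eqI)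

lemma F4_img: "F4 n = (\<lambda>k. 4*k) ` {1..n div 4}"
  unfolding F4_def by (auto elim!: dvdE intro!: image_eqI)

lemma Phi_split: "Phi n = PX (Od n) * PX (Evn n)"
proof -
  have u: "{1..n} = Od n \<union> Evn n" and d: "Od n \<inter> Evn n = {}" unfolding Od_def Evn_def by auto
  have f: "finite (Od n)" "finite (Evn n)" unfolding Od_def Evn_def by auto
  show ?thesis unfolding Phi_def u by (rule PX_union[OF f d])
qed

lemma Evn_cg: "cg (Suc n) (PX (Evn n)) ((Phi n)^2)"
proof -
  have "cg (Suc (n div 2)) (PX {1..n div 2}) (Phi n)"
    unfolding Phi_def by (rule PX_trunc) auto
  then have "cg (2 * Suc (n div 2)) ((PX {1..n div 2})^2) ((Phi n)^2)" by (rule cg_sq)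
  moreover have "Suc n \<le> 2 * Suc (n div 2)"
    by presburger
  ultimately have "cg (Suc n) ((PX {1..n div 2})^2) ((Phi n)^2)" by (rule cg_mono)
  then show ?thesis unfolding Evn_img PX_dbl .
qed

lemma F4_cg: "cg (Suc n) (PX (F4 n)) ((Phi n)^4)"
proof -
  have "cg (Suc (n div 4)) (PX {1..n div 4}) (Phi n)"
    unfolding Phi_def by (rule PX_trunc) auto
  then have "cg (2 * Suc (n div 4)) ((PX {1..n div 4})^2) ((Phi n)^2)" by (rule cg_sq)
  then have "cg (2 * (2 * Suc (n div 4))) (((PX {1..n div 4})^2)^2) (((Phi n)^2)^2)" by (rule cg_sq)
  moreover have "Suc n \<le> 2 * (2 * Suc (n div 4))"
    by presburger
  ultimately have "cg (Suc n) (((PX {1..n div 4})^2)^2) (((Phi n)^2)^2)" by (rule cg_mono)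
  moreover have "\<And>x::bf. (x^2)^2 = x^4" by (simp flip: power_mult)
  ultimately have "cg (Suc n) ((PX {1..n div 4})^4) ((Phi n)^4)" by simp
  then show ?thesis unfolding F4_img PX_quad .
qed

lemma Od_Phi2: "cg (Suc n) (PX (Od n) * (Phi n)^2) (Phi n)"
proof -
  have "cg (Suc n) (PX (Od n) * (Phi n)^2) (PX (Od n) * PX (Evn n))"
    using cg_sym[OF Evn_cg] by (intro cg_mult cg_refl)
  then show ?thesis by (simp add: Phi_split)
qed

lemma OdF4_cg: "cg (Suc n) (PX (Od n) * PX (F4 n)) ((Phi n)^3)"
proof -
  have "cg (Suc n) (PX (Od n) * PX (F4 n)) (PX (Od n) * (Phi n)^4)"
    using F4_cg by (intro cg_mult cg_refl)
  also have "PX (Od n) * (Phi n)^4 = (PX (Od n) * (Phi n)^2) * (Phi n)^2"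
    by (simp add: power_add[symmetric] mult.assoc)
  finally have a: "cg (Suc n) (PX (Od n) * PX (F4 n)) ((PX (Od n) * (Phi n)^2) * (Phi n)^2)" .
  have "cg (Suc n) ((PX (Od n) * (Phi n)^2) * (Phi n)^2) (Phi n * (Phi n)^2)"
    using Od_Phi2 by (intro cg_mult cg_refl)
  moreover have "Phi n * (Phi n)^2 = (Phi n)^3" by (simp add: power3_eq_cube power2_eq_square)
  ultimately show ?thesis using a by (metis cg_trans)
qed


lemma Uc_fin: "finite (Uc c M)" unfolding Uc_def by simp

lemma Uc_pos: "x \<in> Uc c M \<Longrightarrow> 2 \<le> c \<Longrightarrow> 1 \<le> x"
  unfolding Uc_def by auto

lemma U3: "Uc 3 n \<inter> {..<Suc n} = {1..n} \<inter> {..<Suc n}"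
proof (intro equalityI subsetI)
  fix x assume "x \<in> Uc 3 n \<inter> {..<Suc n}"
  then show "x \<in> {1..n} \<inter> {..<Suc n}" using Uc_pos[of x 3 n] by auto
next
  fix x assume x: "x \<in> {1..n} \<inter> {..<Suc n}"
  then have x1: "1 \<le> x" "x \<le> n" by auto
  have "x mod 3 = 0 \<or> x mod 3 = 1 \<or> x mod 3 = 2" by presburger
  then consider "x mod 3 = 0" | "x mod 3 = 1" | "x mod 3 = 2" by (elim disjE) auto
  then have "x \<in> Uc 3 n"
  proof cases
    case 1
    have "x = 3 * (x div 3)" "1 \<le> x div 3" "x div 3 \<le> Suc n" using x1 1 by presburger+
    then have "x = 3 * (x div 3)" "x div 3 \<in> {1..Suc n}" by auto
    then show ?thesis unfolding Uc_def by blast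
  next
    case 2
    show ?thesis
    proof (cases "x = 1")
      case True then show ?thesis unfolding Uc_def by blast
    next
      case False
      have "x = 3 * (x div 3) + 1" "1 \<le> x div 3" "x div 3 \<le> Suc n" using x1 2 False by presburger+
      then have "x = 3 * (x div 3) + 1" "x div 3 \<in> {1..Suc n}" by auto
      then show ?thesis unfolding Uc_def by blast
    qed
  next
    case 3
    have "x = 3 * (x div 3) + (3 - 1)" "x div 3 < n" using x1 3 by presburger+
    then have "x = 3 * (x div 3) + (3 - 1)" "x div 3 \<in> {..<n}" by auto
    then show ?thesis unfolding Uc_def by blast
  qed
  then show "x \<in> Uc 3 n \<inter> {..<Suc n}" using x by simp
qed

lemma U4: "Uc 4 n \<inter> {..<Suc n} = (Od n \<union> F4 n) \<inter> {..<Suc n}"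
proof (intro equalityI subsetI)
  fix x assume a: "x \<in> Uc 4 n \<inter> {..<Suc n}"
  then have x1: "1 \<le> x" "x \<le> n" using Uc_pos[of x 4 n] by auto
  from a have "x \<in> Uc 4 n" by simp
  then have "odd x \<or> 4 dvd x" unfolding Uc_def by (auto; presburger)
  then show "x \<in> (Od n \<union> F4 n) \<inter> {..<Suc n}" using x1 unfolding Od_def F4_def by auto
next
  fix x assume x: "x \<in> (Od n \<union> F4 n) \<inter> {..<Suc n}"
  then have x1: "1 \<le> x" "x \<le> n" and o: "odd x \<or> 4 dvd x" unfolding Od_def F4_def by auto
  from o have "x mod 4 = 0 \<or> x mod 4 = 1 \<or> x mod 4 = 3" by presburger
  then consider "x mod 4 = 0" | "x mod 4 = 1" | "x mod 4 = 3" by (elim disjE) auto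
  then have "x \<in> Uc 4 n"
  proof cases
    case 1
    have "x = 4 * (x div 4)" "1 \<le> x div 4" "x div 4 \<le> Suc n" using x1 1 by presburger+
    then have "x = 4 * (x div 4)" "x div 4 \<in> {1..Suc n}" by auto
    then show ?thesis unfolding Uc_def by blast
  next
    case 2
    show ?thesis
    proof (cases "x = 1")
      case True then show ?thesis unfolding Uc_def by blast
    next
      case False
      have "x = 4 * (x div 4) + 1" "1 \<le> x div 4" "x div 4 \<le> Suc n" using x1 2 False by presburger+
      then have "x = 4 * (x div 4) + 1" "x div 4 \<in> {1..Suc n}" by auto
      then show ?thesis unfolding Uc_def by blast
    qed
  next
    case 3
    have "x = 4 * (x div 4) + (4 - 1)" "x div 4 < n" using x1 3 by presburger+
    then have "x = 4 * (x div 4) + (4 - 1)" "x div 4 \<in> {..<n}" by auto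
    then show ?thesis unfolding Uc_def by blast
  qed
  then show "x \<in> Uc 4 n \<inter> {..<Suc n}" using x by simp
qed


lemma S_cg:
  assumes "3 \<le> c"
  shows "cg (n + Suc n) (fps_X^n * PX (Uc c n)) (\<Sum>i\<le>2 * Suc n. fps_X^(i + c * Tz (int i - int (Suc n))))"
proof -
  have "3 * n \<le> c * n" using assms by (rule mult_right_mono) simp
  moreover have "c * Suc n = c + c * n" by simp
  ultimately have "n + Suc n \<le> c * Suc n" using assms by linarith
  from jtp_cong[OF this] show ?thesis unfolding jtp_lhs[OF assms] .
qed

lemma sum_X_nth: "(\<Sum>i\<in>S. fps_X^(e i) :: bf) $ t = (\<Sum>i\<in>S. if e i = t then 1 else 0)"
  by (simp add: fps_sum_nth eq_commute)

lemma phi3_coeff: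
  "(Phi n ^ 3) $ n = (\<Sum>i\<le>2 * Suc n. if i + 4 * Tz (int i - int (Suc n)) = 2 * n then 1 else (0::bit))"
proof -
  let ?Y = "PX (Uc 4 n)"
  have "cg (Suc n) ?Y (PX (Od n \<union> F4 n))"
    by (rule PX_trunc) (auto simp: Uc_fin U4 Od_def F4_def)
  moreover have "PX (Od n \<union> F4 n) = PX (Od n) * PX (F4 n)"
    by (rule PX_union) (auto simp: Od_def F4_def elim!: dvdE)
  ultimately have "cg (Suc n) ?Y (Phi n ^ 3)" using OdF4_cg by (metis cg_trans)
  then have a: "?Y $ n = (Phi n ^ 3) $ n" by (rule cg_nth) simp
  have b: "(fps_X^n * ?Y) $ (2 * n) = (\<Sum>i\<le>2 * Suc n. fps_X^(i + 4 * Tz (int i - int (Suc n))) :: bf) $ (2 * n)"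
    by (rule cg_nth[OF S_cg[of 4 n]]) simp_all
  have e: "(fps_X^n * ?Y) $ (2 * n) = ?Y $ n" by (simp add: fps_X_power_mult_nth mult_2)
  have c: "(\<Sum>i\<le>2 * Suc n. fps_X^(i + 4 * Tz (int i - int (Suc n))) :: bf) $ (2 * n)
     = (\<Sum>i\<le>2 * Suc n. if i + 4 * Tz (int i - int (Suc n)) = 2 * n then 1 else (0::bit))"
    by (rule sum_X_nth)
  show ?thesis using a b c e by metis
qed

lemma phi2_coeff:
  "(Phi n ^ 2) $ n = (\<Sum>i\<le>2 * Suc n. if 2 * (i + 3 * Tz (int i - int (Suc n))) = 3 * n then 1 else (0::bit))"
proof -
  let ?Y = "PX (Uc 3 n)"
  let ?S = "(\<Sum>i\<le>2 * Suc n. fps_X^(i + 3 * Tz (int i - int (Suc n))) :: bf)"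
  have "cg (Suc n) ?Y (Phi n)" unfolding Phi_def
    by (rule PX_trunc) (auto simp: Uc_fin U3)
  then have "cg (2 * Suc n) (?Y^2) (Phi n ^ 2)" by (rule cg_sq)
  then have a: "(?Y^2) $ n = (Phi n ^ 2) $ n" by (rule cg_nth) simp
  have "cg (2 * (n + Suc n)) ((fps_X^n * ?Y)^2) (?S^2)"
    using S_cg[of 3 n] by (intro cg_sq) simp
  then have b: "((fps_X^n * ?Y)^2) $ (3 * n) = (?S^2) $ (3 * n)" by (rule cg_nth) arith
  have "(fps_X^n * ?Y)^2 = fps_X^(2*n) * ?Y^2" by (simp add: power_mult_distrib power_mult[symmetric] mult.commute)
  then have c: "((fps_X^n * ?Y)^2) $ (3 * n) = (?Y^2) $ n" by (simp add: fps_X_power_mult_nth)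
  have d: "?S^2 = (\<Sum>i\<le>2 * Suc n. fps_X^(2 * (i + 3 * Tz (int i - int (Suc n)))))"
    unfolding bf_sq_sum[OF finite_atMost] by (rule sum.cong) (simp_all add: power_mult[symmetric] mult.commute)
  have e: "(\<Sum>i\<le>2 * Suc n. fps_X^(2 * (i + 3 * Tz (int i - int (Suc n)))) :: bf) $ (3 * n)
     = (\<Sum>i\<le>2 * Suc n. if 2 * (i + 3 * Tz (int i - int (Suc n))) = 3 * n then 1 else (0::bit))"
    by (rule sum_X_nth)
  show ?thesis using a b c d e by metis
qed


lemma res_gen:
  fixes j :: int and a b c :: int
  shows "(a*j*j + b*j + c) mod 11 = (a*(j mod 11)*(j mod 11) + b*(j mod 11) + c) mod 11"
proof -
  define q r where "q = j div 11" and "r = j mod 11"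
  have j: "j = 11*q + r" unfolding q_def r_def by simp
  have "a*j*j + b*j + c = (a*r*r + b*r + c) + (a*11*q*q + 2*a*q*r + b*q) * 11"
    unfolding j by (simp add: algebra_simps)
  then have "(a*j*j + b*j + c) mod 11 = (a*r*r + b*r + c) mod 11" by (simp only: mod_mult_self1)
  then show ?thesis unfolding r_def .
qed

lemma r11_cases: "0 \<le> (r::int) \<Longrightarrow> r < 11 \<Longrightarrow>
  r = 0 \<or> r = 1 \<or> r = 2 \<or> r = 3 \<or> r = 4 \<or> r = 5 \<or> r = 6 \<or> r = 7 \<or> r = 8 \<or> r = 9 \<or> r = 10"
  by arith

lemma res3: "(3*j*j + 5*j + 2) mod 11 \<notin> {5, 7, 9::int}"
proof -
  define r where "r = j mod 11"
  have "0 \<le> r" "r < 11" unfolding r_def by simp_all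
  then have "r = 0 \<or> r = 1 \<or> r = 2 \<or> r = 3 \<or> r = 4 \<or> r = 5 \<or> r = 6 \<or> r = 7 \<or> r = 8 \<or> r = 9 \<or> r = 10"
    by (rule r11_cases)
  then have "(3*r*r + 5*r + 2) mod 11 \<notin> {5, 7, 9::int}"
    by (elim disjE) simp_all
  then have "(3*(j mod 11)*(j mod 11) + 5*(j mod 11) + 2) mod 11 \<notin> {5, 7, 9::int}" unfolding r_def .
  then show ?thesis using res_gen[where j=j and a=3 and b=5 and c=2] by metis
qed

lemma res4: "(2*j*j + 3*j + 1) mod 11 \<notin> {5, 7, 9::int}"
proof -
  define r where "r = j mod 11"
  have "0 \<le> r" "r < 11" unfolding r_def by simp_all
  then have "r = 0 \<or> r = 1 \<or> r = 2 \<or> r = 3 \<or> r = 4 \<or> r = 5 \<or> r = 6 \<or> r = 7 \<or> r = 8 \<or> r = 9 \<or> r = 10"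
    by (rule r11_cases)
  then have "(2*r*r + 3*r + 1) mod 11 \<notin> {5, 7, 9::int}"
    by (elim disjE) simp_all
  then have "(2*(j mod 11)*(j mod 11) + 3*(j mod 11) + 1) mod 11 \<notin> {5, 7, 9::int}" unfolding r_def .
  then show ?thesis using res_gen[where j=j and a=2 and b=3 and c=1] by metis
qed

lemma Tz2: "2 * int (Tz d) = d * (d + 1)"
proof -
  have ev: "even (d * (d + 1))" by simp
  have "d * (d + 1) \<ge> 0" by (cases "d \<ge> 0") (auto simp: zero_le_mult_iff)
  then show ?thesis unfolding Tz_def using ev by simp
qed

lemma nt3:
  assumes "n mod 11 \<in> {5, 7, 9::nat}"
  shows "2 * (i + 3 * Tz (int i - int (Suc n))) \<noteq> 3 * n"
proof
  assume h: "2 * (i + 3 * Tz (int i - int (Suc n))) = 3 * n"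
  define j where "j = int i - int (Suc n)"
  have "int (2 * (i + 3 * Tz j)) = int (3 * n)" using h unfolding j_def by (simp only:)
  then have "2 * (int i + 3 * int (Tz j)) = 3 * int n" by (simp only: of_nat_add of_nat_mult of_nat_numeral)
  then have "2 * int i + 3 * (j * (j + 1)) = 3 * int n" using Tz2[of j] by simp
  then have "int n = 3*j*j + 5*j + 2" unfolding j_def by (simp add: algebra_simps)
  then have "int n mod 11 \<notin> {5, 7, 9}" using res3[of j] by simp
  moreover have "int n mod 11 = int (n mod 11)" by (simp add: zmod_int)
  ultimately show False using assms by auto
qed

lemma nt4:
  assumes "n mod 11 \<in> {5, 7, 9::nat}"
  shows "i + 4 * Tz (int i - int (Suc n)) \<noteq> 2 * n"
proof
  assume h: "i + 4 * Tz (int i - int (Suc n)) = 2 * n"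
  define j where "j = int i - int (Suc n)"
  have "int (i + 4 * Tz j) = int (2 * n)" using h unfolding j_def by (simp only:)
  then have "int i + 4 * int (Tz j) = 2 * int n" by (simp only: of_nat_add of_nat_mult of_nat_numeral)
  then have "int i + 2 * (j * (j + 1)) = 2 * int n" using Tz2[of j] by simp
  then have "int n = 2*j*j + 3*j + 1" unfolding j_def by (simp add: algebra_simps)
  then have "int n mod 11 \<notin> {5, 7, 9}" using res4[of j] by simp
  moreover have "int n mod 11 = int (n mod 11)" by (simp add: zmod_int)
  ultimately show False using assms by auto
qed


definition Mset :: "nat set \<Rightarrow> (nat \<Rightarrow> nat \<Rightarrow> bool) \<Rightarrow> nat \<Rightarrow> nat multiset set" where
  "Mset K A s = {lam. set_mset lam \<subseteq> K \<and> (\<forall>k\<in>K. A k (count lam k)) \<and> sum_mset lam = s}"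

definition gfk :: "(nat \<Rightarrow> nat \<Rightarrow> bool) \<Rightarrow> nat \<Rightarrow> 'a::comm_semiring_1 fps" where
  "gfk A k = Abs_fps (\<lambda>i. if k dvd i \<and> A k (i div k) then 1 else 0)"

lemma Mset_empty: "Mset {} A s = (if s = 0 then {{#}} else {})"
  unfolding Mset_def by auto

lemma Mset_insert:
  assumes k: "k \<notin> K" "0 < k"
  shows "Mset (insert k K) A s =
    (\<Union>i\<in>{i. i \<le> s \<and> k dvd i \<and> A k (i div k)}. (\<lambda>\<mu>. \<mu> + replicate_mset (i div k) k) ` Mset K A (s - i))"
proof (intro equalityI subsetI)
  fix lam assume lam: "lam \<in> Mset (insert k K) A s"
  define c where "c = count lam k"
  define mu where "mu = {#x \<in># lam. x \<noteq> k#}"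
  have dec: "lam = mu + replicate_mset c k"
    unfolding mu_def c_def by (rule multiset_eqI) auto
  have sl: "sum_mset lam = sum_mset mu + c * k" using dec by simp
  have i1: "c * k \<le> s" using lam sl unfolding Mset_def by auto
  have i2: "c * k div k = c" using k by simp
  have "A k c" using lam unfolding Mset_def c_def by auto
  moreover have "mu \<in> Mset K A (s - c * k)"
  proof -
    have "set_mset mu \<subseteq> K" using lam unfolding Mset_def mu_def by auto
    moreover have "\<forall>k'\<in>K. A k' (count mu k')"
      using lam k unfolding Mset_def mu_def by auto
    moreover have "sum_mset mu = s - c * k" using lam sl unfolding Mset_def by auto
    ultimately show ?thesis unfolding Mset_def by auto
  qed
  ultimately show "lam \<in> (\<Union>i\<in>{i. i \<le> s \<and> k dvd i \<and> A k (i div k)}. (\<lambda>\<mu>. \<mu> + replicate_mset (i div k) k) ` Mset K A (s - i))"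
    using i1 i2 dec by (intro UN_I[of "c * k"]) auto
next
  fix lam assume "lam \<in> (\<Union>i\<in>{i. i \<le> s \<and> k dvd i \<and> A k (i div k)}. (\<lambda>\<mu>. \<mu> + replicate_mset (i div k) k) ` Mset K A (s - i))"
  then obtain i mu where i: "i \<le> s" "k dvd i" "A k (i div k)" and mu: "mu \<in> Mset K A (s - i)"
    and lam: "lam = mu + replicate_mset (i div k) k" by auto
  have ck: "count mu k = 0" using mu k unfolding Mset_def by (auto simp: count_eq_zero_iff)
  have "sum_mset lam = (s - i) + i div k * k" using mu lam unfolding Mset_def by simp
  also have "\<dots> = s" using i by simp
  finally have "sum_mset lam = s" .
  moreover have "set_mset lam \<subseteq> insert k K" using mu lam unfolding Mset_def by auto
  moreover have "\<forall>k'\<in>insert k K. A k' (count lam k')"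
  proof
    fix k' assume "k' \<in> insert k K"
    then show "A k' (count lam k')"
    proof
      assume "k' = k" then show ?thesis using i ck lam by simp
    next
      assume "k' \<in> K" then have "k' \<noteq> k" using k by auto
      then show ?thesis using mu \<open>k' \<in> K\<close> lam unfolding Mset_def by auto
    qed
  qed
  ultimately show "lam \<in> Mset (insert k K) A s" unfolding Mset_def by auto
qed

lemma count_gf:
  assumes "finite K" "0 \<notin> K"
  shows "finite (Mset K A s) \<and> of_nat (card (Mset K A s)) = ((\<Prod>k\<in>K. gfk A k) :: 'a::comm_semiring_1 fps) $ s"
  using assms
proof (induction K arbitrary: s rule: finite_induct)
  case empty
  then show ?case by (simp add: Mset_empty)
next
  case (insert k K)
  define I where "I = {i. i \<le> s \<and> k dvd i \<and> A k (i div k)}"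
  have k: "k \<notin> K" "0 < k" using insert by auto
  have IH: "\<And>s. finite (Mset K A s) \<and> of_nat (card (Mset K A s)) = ((\<Prod>k\<in>K. gfk A k) :: 'a fps) $ s"
    using insert by auto
  have fI: "finite I" unfolding I_def by simp
  have eq: "Mset (insert k K) A s = (\<Union>i\<in>I. (\<lambda>\<mu>. \<mu> + replicate_mset (i div k) k) ` Mset K A (s - i))"
    unfolding I_def by (rule Mset_insert[OF k])
  have fin: "finite (Mset (insert k K) A s)" unfolding eq using fI IH by auto
  have disj: "\<forall>i\<in>I. \<forall>j\<in>I. i \<noteq> j \<longrightarrow>
      ((\<lambda>\<mu>. \<mu> + replicate_mset (i div k) k) ` Mset K A (s - i)) \<inter> ((\<lambda>\<mu>. \<mu> + replicate_mset (j div k) k) ` Mset K A (s - j)) = {}"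
  proof (intro ballI impI)
    fix i j assume ij: "i \<in> I" "j \<in> I" "i \<noteq> j"
    have ne: "i div k \<noteq> j div k" using ij unfolding I_def by (auto elim!: dvdE simp: k)
    have cz: "count mu k = 0" if "mu \<in> Mset K A t" for mu t
      using that k unfolding Mset_def by (auto simp: count_eq_zero_iff)
    show "((\<lambda>\<mu>. \<mu> + replicate_mset (i div k) k) ` Mset K A (s - i)) \<inter> ((\<lambda>\<mu>. \<mu> + replicate_mset (j div k) k) ` Mset K A (s - j)) = {}"
    proof (rule equals0I)
      fix x assume "x \<in> ((\<lambda>\<mu>. \<mu> + replicate_mset (i div k) k) ` Mset K A (s - i)) \<inter> ((\<lambda>\<mu>. \<mu> + replicate_mset (j div k) k) ` Mset K A (s - j))"
      then obtain mu1 mu2 where m1: "mu1 \<in> Mset K A (s - i)" "x = mu1 + replicate_mset (i div k) k"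
        and m2: "mu2 \<in> Mset K A (s - j)" "x = mu2 + replicate_mset (j div k) k" by blast
      have "count x k = i div k" using m1 cz[OF m1(1)] by simp
      moreover have "count x k = j div k" using m2 cz[OF m2(1)] by simp
      ultimately show False using ne by simp
    qed
  qed
  have "card (Mset (insert k K) A s) = (\<Sum>i\<in>I. card ((\<lambda>\<mu>. \<mu> + replicate_mset (i div k) k) ` Mset K A (s - i)))"
    unfolding eq using fI IH disj by (intro card_UN_disjoint) auto
  also have "\<dots> = (\<Sum>i\<in>I. card (Mset K A (s - i)))"
    by (intro sum.cong refl card_image) (auto simp: inj_on_def)
  finally have c: "of_nat (card (Mset (insert k K) A s)) = (\<Sum>i\<in>I. ((\<Prod>k\<in>K. gfk A k) :: 'a fps) $ (s - i))"
    using IH by simp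
  have "((\<Prod>k\<in>insert k K. gfk A k) :: 'a fps) $ s = (gfk A k * (\<Prod>k\<in>K. gfk A k) :: 'a fps) $ s"
    using insert by simp
  also have "\<dots> = (\<Sum>i=0..s. (gfk A k :: 'a fps) $ i * (\<Prod>k\<in>K. gfk A k) $ (s - i))"
    by (rule fps_mult_nth)
  also have "\<dots> = (\<Sum>i\<in>{0..s}. if i \<in> I then ((\<Prod>k\<in>K. gfk A k) :: 'a fps) $ (s - i) else 0)"
    by (intro sum.cong refl) (auto simp: gfk_def I_def)
  also have "\<dots> = (\<Sum>i\<in>I. ((\<Prod>k\<in>K. gfk A k) :: 'a fps) $ (s - i))"
    by (subst sum.If_cases) (auto simp: I_def intro!: sum.cong)
  finally show ?case using c fin by simp
qed


definition Aj :: "nat \<Rightarrow> nat \<Rightarrow> nat \<Rightarrow> bool" where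
  "Aj j k c \<longleftrightarrow> (odd k \<and> k < 2*j \<longrightarrow> 1 \<le> c) \<and> (even k \<longrightarrow> c \<le> 1 \<and> (k \<le> 2*j \<longrightarrow> c = 0))"

definition JJ :: "nat \<Rightarrow> nat set" where "JJ n = {j. 1 \<le> j \<and> 2*j \<le> n + 1}"

lemma elem_le_sum: "(x::nat) \<in># lam \<Longrightarrow> x \<le> sum_mset lam"
proof -
  assume "x \<in># lam"
  then have e: "add_mset x (lam - {#x#}) = lam" by (rule insert_DiffM)
  have "sum_mset (add_mset x (lam - {#x#})) = x + sum_mset (lam - {#x#})" by simp
  then have "sum_mset lam = x + sum_mset (lam - {#x#})" by (simp only: e)
  then show ?thesis by linarith
qed

lemma Sj_eq:
  assumes j: "j \<in> JJ n"
  shows "{lam. is_partition n lam \<and> c11_cond j lam} = Mset {1..n} (Aj j) n"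
proof (intro equalityI subsetI)
  fix lam assume "lam \<in> {lam. is_partition n lam \<and> c11_cond j lam}"
  then have p: "is_partition n lam" and c: "c11_cond j lam" by auto
  have sub: "set_mset lam \<subseteq> {1..n}"
  proof
    fix x assume "x \<in> set_mset lam"
    then show "x \<in> {1..n}" using p elem_le_sum[of x lam] unfolding is_partition_def by auto
  qed
  have A: "\<forall>k\<in>{1..n}. Aj j k (count lam k)"
  proof
    fix k assume k: "k \<in> {1..n}"
    have o: "1 \<le> count lam k" if "odd k" "k < 2*j"
    proof -
      obtain i where i: "k = 2*i + 1" using \<open>odd k\<close> by (auto elim: oddE)
      have "Suc i \<in> {1..j}" using i that by auto
      then have "2 * Suc i - 1 \<in># lam" using c unfolding c11_cond_def by blast
      then show ?thesis using i by simp
    qed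
    have e: "count lam k \<le> 1 \<and> (k \<le> 2*j \<longrightarrow> count lam k = 0)" if "even k"
    proof (cases "k \<in># lam")
      case True
      then show ?thesis using c that unfolding c11_cond_def by auto
    next
      case False
      then have "count lam k = 0" by (simp add: count_eq_zero_iff)
      then show ?thesis by simp
    qed
    show "Aj j k (count lam k)" unfolding Aj_def using o e by auto
  qed
  show "lam \<in> Mset {1..n} (Aj j) n" unfolding Mset_def using sub A p unfolding is_partition_def by auto
next
  fix lam assume "lam \<in> Mset {1..n} (Aj j) n"
  then have sub: "set_mset lam \<subseteq> {1..n}" and A: "\<forall>k\<in>{1..n}. Aj j k (count lam k)"
    and s: "sum_mset lam = n" unfolding Mset_def by auto
  have "is_partition n lam" unfolding is_partition_def using sub s by auto
  moreover have "c11_cond j lam"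
  proof -
    have j1: "1 \<le> j" "2*j \<le> n + 1" using j unfolding JJ_def by auto
    have "\<forall>i\<in>{1..j}. 2 * i - 1 \<in># lam"
    proof
      fix i assume i: "i \<in> {1..j}"
      then have k: "2*i - 1 \<in> {1..n}" "odd (2*i - 1)" "2*i - 1 < 2*j" using j1 by auto
      then have "1 \<le> count lam (2*i - 1)" using A unfolding Aj_def by auto
      then show "2 * i - 1 \<in># lam" by (simp add: Suc_le_eq)
    qed
    moreover have "\<forall>p\<in>#lam. even p \<longrightarrow> p > 2*j \<and> count lam p = 1"
    proof (intro ballI impI)
      fix p assume p: "p \<in># lam" "even p"
      then have pn: "p \<in> {1..n}" and c0: "0 < count lam p" using sub by auto
      have a: "Aj j p (count lam p)" using A pn by blast
      then have h1: "count lam p \<le> 1" and h2: "p \<le> 2*j \<longrightarrow> count lam p = 0" using p(2) unfolding Aj_def by blast+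
      have "\<not> p \<le> 2*j" using h2 c0 by auto
      moreover have "count lam p = 1" using h1 c0 by linarith
      ultimately show "p > 2*j \<and> count lam p = 1" by simp
    qed
    ultimately show ?thesis unfolding c11_cond_def using j1 by blast
  qed
  ultimately show "lam \<in> {lam. is_partition n lam \<and> c11_cond j lam}" by simp
qed

lemma c11_sum: "c11 n = (\<Sum>j\<in>JJ n. card (Mset {1..n} (Aj j) n))"
proof -
  have fJ: "finite (JJ n)" unfolding JJ_def by (rule finite_subset[of _ "{..n+1}"]) auto
  have fS: "finite (Mset {1..n} (Aj j) n)" for j using count_gf[of "{1..n}" "Aj j" n, where 'a=bit] by simp
  have eq: "{(j, lam). is_partition n lam \<and> c11_cond j lam} = (\<Union>j\<in>JJ n. Pair j ` Mset {1..n} (Aj j) n)"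
  proof (intro equalityI subsetI)
    fix x assume "x \<in> {(j, lam). is_partition n lam \<and> c11_cond j lam}"
    then obtain j lam where x: "x = (j, lam)" and p: "is_partition n lam" and c: "c11_cond j lam" by auto
    have "j \<in> JJ n"
    proof -
      have "1 \<le> j" using c unfolding c11_cond_def by simp
      then have "2*j - 1 \<in># lam" using c unfolding c11_cond_def by auto
      then have "2*j - 1 \<le> n" using elem_le_sum p unfolding is_partition_def by fastforce
      then show ?thesis using \<open>1 \<le> j\<close> unfolding JJ_def by auto
    qed
    then show "x \<in> (\<Union>j\<in>JJ n. Pair j ` Mset {1..n} (Aj j) n)" using x p c Sj_eq by blast
  next
    fix x assume "x \<in> (\<Union>j\<in>JJ n. Pair j ` Mset {1..n} (Aj j) n)"
    then obtain j lam where "j \<in> JJ n" "lam \<in> Mset {1..n} (Aj j) n" "x = (j, lam)" by auto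
    then show "x \<in> {(j, lam). is_partition n lam \<and> c11_cond j lam}" using Sj_eq by blast
  qed
  have "card (\<Union>j\<in>JJ n. Pair j ` Mset {1..n} (Aj j) n) = (\<Sum>j\<in>JJ n. card (Pair j ` Mset {1..n} (Aj j) n))"
    using fJ fS by (intro card_UN_disjoint) auto
  also have "\<dots> = (\<Sum>j\<in>JJ n. card (Mset {1..n} (Aj j) n))"
    by (intro sum.cong refl card_image) (auto simp: inj_on_def)
  finally show ?thesis unfolding c11_def eq .
qed

lemma c11_gf: "(of_nat (c11 n) :: bit) = (\<Sum>j\<in>JJ n. ((\<Prod>k\<in>{1..n}. gfk (Aj j) k) :: bf) $ n)"
  unfolding c11_sum of_nat_sum using count_gf[of "{1..n}" _ n, where 'a=bit] by simp


definition geo :: "nat \<Rightarrow> bf" where "geo k = Abs_fps (\<lambda>i. if k dvd i then 1 else 0)"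

lemma geo_inv: "0 < k \<Longrightarrow> geo k * (1 + fps_X^k) = 1"
proof (rule fps_ext)
  fix i assume k: "0 < k"
  have "(geo k * (1 + fps_X^k)) $ i = geo k $ i + (geo k * fps_X^k) $ i" by (simp add: algebra_simps)
  also have "\<dots> = (if k dvd i then 1 else 0) + (if i < k then 0 else (if k dvd (i - k) then 1 else 0))"
    by (simp add: geo_def fps_X_power_mult_right_nth)
  also have "\<dots> = (1::bf) $ i"
  proof (cases "i < k")
    case True
    then have "k dvd i \<longleftrightarrow> i = 0" using k by (auto dest: dvd_imp_le)
    then show ?thesis using True by simp
  next
    case False
    then have "k dvd (i - k) \<longleftrightarrow> k dvd i" by (simp add: dvd_minus_self)
    moreover have "i \<noteq> 0" using False k by simp
    ultimately show ?thesis using False by simp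
  qed
  finally show "(geo k * (1 + fps_X^k)) $ i = (1::bf) $ i" .
qed

lemma gfk_fact:
  assumes k: "0 < k"
  shows "(gfk (Aj j) k :: bf) = (if odd k \<and> k < 2*j then fps_X^k else 1) * (if odd k then geo k else 1)
          * (if even k \<and> 2*j < k then 1 + fps_X^k else 1)"
proof (cases "odd k")
  case True
  show ?thesis
  proof (cases "k < 2*j")
    case True2: True
    have "(gfk (Aj j) k :: bf) = fps_X^k * geo k"
    proof (rule fps_ext)
      fix i
      have "(k dvd i \<and> 1 \<le> i div k) \<longleftrightarrow> (\<not> i < k \<and> k dvd (i - k))"
      proof
        assume a: "k dvd i \<and> 1 \<le> i div k"
        then have "k \<le> i" using k by (metis div_less le_less_linear not_one_le_zero)
        then show "\<not> i < k \<and> k dvd (i - k)" using a by (simp add: dvd_diff_nat)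
      next
        assume a: "\<not> i < k \<and> k dvd (i - k)"
        then have "k dvd i" by (metis dvd_diff_nat dvd_refl le_add_diff_inverse2 not_less dvd_add)
        moreover have "1 \<le> i div k" using a k by (simp add: Suc_le_eq div_greater_zero_iff)
        ultimately show "k dvd i \<and> 1 \<le> i div k" by simp
      qed
      then show "(gfk (Aj j) k :: bf) $ i = (fps_X^k * geo k) $ i"
        using True True2 by (simp add: gfk_def Aj_def geo_def fps_X_power_mult_nth)
    qed
    then show ?thesis using True True2 by simp
  next
    case False2: False
    have "(gfk (Aj j) k :: bf) = geo k"
      using True False2 by (simp add: gfk_def Aj_def geo_def fps_eq_iff)
    then show ?thesis using True False2 by simp
  qed
next
  case False
  show ?thesis
  proof (cases "2*j < k")
    case True2: True
    have "(gfk (Aj j) k :: bf) = 1 + fps_X^k"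
    proof (rule fps_ext)
      fix i
      have "(k dvd i \<and> i div k \<le> 1) \<longleftrightarrow> (i = 0 \<or> i = k)"
      proof
        assume a: "k dvd i \<and> i div k \<le> 1"
        then obtain m where m: "i = k * m" by (auto elim: dvdE)
        then have "m \<le> 1" using a k by simp
        then show "i = 0 \<or> i = k" using m by (cases m) auto
      qed (use k in auto)
      then show "(gfk (Aj j) k :: bf) $ i = (1 + fps_X^k) $ i"
        using False True2 k by (auto simp: gfk_def Aj_def)
    qed
    then show ?thesis using False True2 by simp
  next
    case False2: False
    have "(gfk (Aj j) k :: bf) = 1"
    proof (rule fps_ext)
      fix i
      have "(k dvd i \<and> i div k = 0) \<longleftrightarrow> i = 0" using k by (auto elim: dvdE)
      then show "(gfk (Aj j) k :: bf) $ i = (1::bf) $ i"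
        using False False2 k by (auto simp: gfk_def Aj_def)
    qed
    then show ?thesis using False False2 by simp
  qed
qed


definition Og :: "nat \<Rightarrow> bf" where "Og n = (\<Prod>k\<in>Od n. geo k)"
definition HiE :: "nat \<Rightarrow> nat \<Rightarrow> nat set" where "HiE n j = {k\<in>{1..n}. even k \<and> 2*j < k}"

lemma sum_odds: "(\<Sum>i<j. 2*i + 1) = j * (j::nat)"
  by (induction j) auto

lemma odd_set: "2*(j::nat) \<le> n + 1 \<Longrightarrow> {k\<in>{1..n}. odd k \<and> k < 2*j} = (\<lambda>i. 2*i + 1) ` {..<j}"
proof (intro equalityI subsetI)
  fix k assume a: "2*j \<le> n + 1" "k \<in> {k\<in>{1..n}. odd k \<and> k < 2*j}"
  then obtain i where i: "k = 2*i + 1" by (auto elim: oddE)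
  then have "i < j" using a by auto
  then show "k \<in> (\<lambda>i. 2*i + 1) ` {..<j}" using i by auto
next
  fix k assume a: "2*j \<le> n + 1" "k \<in> (\<lambda>i. 2*i + 1) ` {..<j}"
  then obtain i where "i < j" "k = 2*i + 1" by auto
  then show "k \<in> {k\<in>{1..n}. odd k \<and> k < 2*j}" using a(1) by auto
qed

lemma sum_lo: "2*(j::nat) \<le> n + 1 \<Longrightarrow> (\<Sum>k\<in>{k\<in>{1..n}. odd k \<and> k < 2*j}. k) = j * j"
proof -
  assume a: "2*j \<le> n + 1"
  have "(\<Sum>k\<in>{k\<in>{1..n}. odd k \<and> k < 2*j}. k) = (\<Sum>k\<in>(\<lambda>i. 2*i + 1) ` {..<j}. k)"
    using odd_set[OF a] by simp
  also have "\<dots> = (\<Sum>i<j. 2*i + 1)" by (subst sum.reindex) (auto simp: inj_on_def)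
  finally show ?thesis using sum_odds by simp
qed

lemma prod_if1: "(\<Prod>k\<in>A. if P k then f k else (1::'a::comm_monoid_mult)) = (\<Prod>k\<in>{k\<in>A. P k}. f k)"
  if "finite A" using that by (simp add: prod.inter_filter)

lemma Gj:
  assumes j: "j \<in> JJ n"
  shows "(\<Prod>k\<in>{1..n}. gfk (Aj j) k :: bf) = fps_X^(j*j) * Og n * PX (HiE n j)"
proof -
  have "(\<Prod>k\<in>{1..n}. gfk (Aj j) k :: bf) = (\<Prod>k\<in>{1..n}.
      (if odd k \<and> k < 2*j then fps_X^k else 1) * (if odd k then geo k else 1)
          * (if even k \<and> 2*j < k then 1 + fps_X^k else 1))"
    by (rule prod.cong[OF refl]) (rule gfk_fact, simp)
  also have "\<dots> = (\<Prod>k\<in>{1..n}. if odd k \<and> k < 2*j then fps_X^k else 1)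
      * (\<Prod>k\<in>{1..n}. if odd k then geo k else 1)
      * (\<Prod>k\<in>{1..n}. if even k \<and> 2*j < k then 1 + fps_X^k else 1)"
    by (simp only: prod.distrib)
  also have "(\<Prod>k\<in>{1..n}. if odd k \<and> k < 2*j then fps_X^k else (1::bf)) = fps_X^(j*j)"
  proof -
    have "(\<Prod>k\<in>{1..n}. if odd k \<and> k < 2*j then fps_X^k else (1::bf))
        = (\<Prod>k\<in>{k\<in>{1..n}. odd k \<and> k < 2*j}. fps_X^k)" by (rule prod_if1) simp
    also have "\<dots> = fps_X^(\<Sum>k\<in>{k\<in>{1..n}. odd k \<and> k < 2*j}. k)" by (simp add: power_sum)
    also have "\<dots> = fps_X^(j*j)" using j sum_lo[of j n] unfolding JJ_def by simp
    finally show ?thesis .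
  qed
  also have "(\<Prod>k\<in>{1..n}. if odd k then geo k else 1) = Og n"
    unfolding Og_def Od_def by (rule prod_if1) simp
  also have "(\<Prod>k\<in>{1..n}. if even k \<and> 2*j < k then 1 + fps_X^k else (1::bf)) = PX (HiE n j)"
    unfolding PX_def HiE_def by (rule prod_if1) simp
  finally show ?thesis .
qed


lemma Od_fin: "finite (Od n)" unfolding Od_def by simp

lemma Og_O: "Og n * PX (Od n) = 1"
proof -
  have "Og n * PX (Od n) = (\<Prod>k\<in>Od n. geo k * (1 + fps_X^k))"
    unfolding Og_def PX_def by (simp add: prod.distrib)
  also have "\<dots> = (\<Prod>k\<in>Od n. 1)" by (rule prod.cong[OF refl]) (rule geo_inv, simp add: Od_def)
  finally show ?thesis by simp
qed

lemma Pq2_0: "(Pq (fps_X^2 :: bf) j) $ 0 = 1"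
  by (simp add: Pq_bf PX_nth0 image_iff)

lemma Pq2_inv: "Pq (fps_X^2 :: bf) j * inverse (Pq (fps_X^2) j) = 1"
  by (rule inverse_mult_eq_1') (simp add: Pq2_0)

lemma HiE_cg:
  assumes j: "1 \<le> j"
  shows "cg (Suc n) (PX (HiE n j)) (PX (Evn n) * inverse (Pq (fps_X^2 :: bf) j))"
proof -
  have p: "Pq (fps_X^2 :: bf) j = PX ((\<lambda>k. 2*k) ` {1..j})" by (rule Pq_bf) simp
  have "PX (HiE n j) * Pq (fps_X^2) j = PX (HiE n j \<union> (\<lambda>k. 2*k) ` {1..j})"
    unfolding p by (rule PX_union[symmetric]) (auto simp: HiE_def)
  moreover have "cg (Suc n) (PX (HiE n j \<union> (\<lambda>k. 2*k) ` {1..j})) (PX (Evn n))"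
  proof (rule PX_trunc)
    show "(HiE n j \<union> (\<lambda>k. 2*k) ` {1..j}) \<inter> {..<Suc n} = Evn n \<inter> {..<Suc n}"
    proof (intro equalityI subsetI)
      fix x assume "x \<in> (HiE n j \<union> (\<lambda>k. 2*k) ` {1..j}) \<inter> {..<Suc n}"
      then show "x \<in> Evn n \<inter> {..<Suc n}" unfolding HiE_def Evn_def by auto
    next
      fix x assume a: "x \<in> Evn n \<inter> {..<Suc n}"
      then obtain m where m: "x = 2*m" "1 \<le> x" "x \<le> n" unfolding Evn_def by (auto elim!: evenE)
      show "x \<in> (HiE n j \<union> (\<lambda>k. 2*k) ` {1..j}) \<inter> {..<Suc n}"
      proof (cases "2*j < x")
        case True then show ?thesis using m unfolding HiE_def by auto
      next
        case False then have "m \<in> {1..j}" using m by auto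
        then show ?thesis using m by auto
      qed
    qed
  qed (auto simp: HiE_def Evn_def)
  ultimately have "cg (Suc n) (PX (HiE n j) * Pq (fps_X^2) j) (PX (Evn n))" by simp
  then have "cg (Suc n) (PX (HiE n j) * Pq (fps_X^2) j * inverse (Pq (fps_X^2 :: bf) j))
      (PX (Evn n) * inverse (Pq (fps_X^2 :: bf) j))" by (rule cg_mult) simp
  then show ?thesis by (simp add: mult.assoc Pq2_inv)
qed


definition Tj :: "nat \<Rightarrow> bf" where "Tj i = fps_X^(i*i) * inverse (Pq (fps_X^2) i)"

lemma Tj_term:
  assumes i: "i \<le> n"
  shows "cg (Suc n) (fps_X^i * (fps_X^2)^(c2 i) * gb (fps_X^2) n i) (Tj i)"
proof -
  let ?P = "Pq (fps_X^2 :: bf) i"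
  have e1: "fps_X^i * (fps_X^2)^(c2 i) = (fps_X :: bf)^(i*i)"
  proof -
    have "(fps_X^2 :: bf)^(c2 i) = fps_X^(2 * c2 i)" by (simp only: power_mult)
    then have "fps_X^i * (fps_X^2 :: bf)^(c2 i) = fps_X^(i + 2 * c2 i)" by (simp only: power_add)
    also have "i + 2 * c2 i = i * i" using c2_closed[of i] by simp
    finally show ?thesis .
  qed
  have d: "(fps_X^2 :: bf)^(Suc n - i) dvd (?P * gb (fps_X^2) n i - 1)" using gb_T1[OF i] .
  have inv: "inverse ?P * ?P = 1" by (rule inverse_mult_eq_1) (simp add: Pq2_0)
  have "gb (fps_X^2) n i - inverse ?P = inverse ?P * (?P * gb (fps_X^2) n i - 1)"
    by (simp add: right_diff_distrib mult.assoc[symmetric] inv)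
  then have "(fps_X^2 :: bf)^(Suc n - i) dvd (gb (fps_X^2) n i - inverse ?P)" using d by simp
  then have "cg (2 * (Suc n - i)) (gb (fps_X^2) n i) (inverse ?P)"
    unfolding cg_def by (simp add: power_mult)
  then have "cg (i*i + 2 * (Suc n - i)) (fps_X^(i*i) * gb (fps_X^2) n i) (fps_X^(i*i) * inverse ?P)"
    by (rule cg_Xmult)
  moreover have "Suc n \<le> i*i + 2 * (Suc n - i)"
  proof -
    have "i \<le> i * i" by (cases i) auto
    then show ?thesis using i by linarith
  qed
  ultimately have "cg (Suc n) (fps_X^(i*i) * gb (fps_X^2) n i) (fps_X^(i*i) * inverse ?P)" by (rule cg_mono)
  then show ?thesis unfolding Tj_def by (simp add: e1 mult.assoc)
qed

lemma Tj_high: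
  assumes "Suc n \<le> i * i"
  shows "cg (Suc n) (Tj i) 0"
proof -
  have "(fps_X :: bf)^(Suc n) dvd fps_X^(i*i)" using assms by (rule le_imp_power_dvd)
  then show ?thesis unfolding cg_def Tj_def by simp
qed

lemma euler_cg: "cg (Suc n) (\<Sum>j\<in>JJ n. Tj j) (PX (Od n) + 1)"
proof -
  have q: "(\<Prod>k<n. 1 + fps_X * (fps_X^2 :: bf)^k) = (\<Sum>i\<le>n. fps_X^i * (fps_X^2)^(c2 i) * gb (fps_X^2) n i)"
    by (rule qbin_a)
  have l: "(\<Prod>k<n. 1 + fps_X * (fps_X^2 :: bf)^k) = PX ((\<lambda>k. 2*k + 1) ` {..<n})"
    by (subst PX_image) (auto simp: inj_on_def power_mult[symmetric] power_add mult.commute)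
  have "cg (Suc n) (PX ((\<lambda>k. 2*k + 1) ` {..<n})) (PX (Od n))"
  proof (rule PX_trunc)
    show "(\<lambda>k. 2*k + 1) ` {..<n} \<inter> {..<Suc n} = Od n \<inter> {..<Suc n}"
    proof (intro equalityI subsetI)
      fix x assume "x \<in> (\<lambda>k. 2*k + 1) ` {..<n} \<inter> {..<Suc n}"
      then show "x \<in> Od n \<inter> {..<Suc n}" unfolding Od_def by auto
    next
      fix x assume "x \<in> Od n \<inter> {..<Suc n}"
      then obtain m where "x = 2*m + 1" "x \<le> n" unfolding Od_def by (auto elim!: oddE)
      then show "x \<in> (\<lambda>k. 2*k + 1) ` {..<n} \<inter> {..<Suc n}" by auto
    qed
  qed (auto simp: Od_fin)
  then have c1: "cg (Suc n) (\<Sum>i\<le>n. fps_X^i * (fps_X^2)^(c2 i) * gb (fps_X^2) n i) (PX (Od n))"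
    using q l by simp
  have c2: "cg (Suc n) (\<Sum>i\<le>n. fps_X^i * (fps_X^2)^(c2 i) * gb (fps_X^2) n i)
      (\<Sum>i\<le>n. if i = 0 \<or> i \<in> JJ n then Tj i else 0)"
  proof (rule cg_sum)
    fix i assume "i \<in> {..n}"
    then have i: "i \<le> n" by simp
    show "cg (Suc n) (fps_X^i * (fps_X^2)^(c2 i) * gb (fps_X^2) n i) (if i = 0 \<or> i \<in> JJ n then Tj i else 0)"
    proof (cases "i = 0 \<or> i \<in> JJ n")
      case True then show ?thesis using Tj_term[OF i] by simp
    next
      case False
      then have "1 \<le> i" "n + 1 < 2 * i" unfolding JJ_def by auto
      then have "2 \<le> i" using i by simp
      then have "2 * i \<le> i * i" by (intro mult_right_mono) simp_all
      then have "Suc n \<le> i * i" using \<open>n + 1 < 2 * i\<close> by linarith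
      then have "cg (Suc n) (Tj i) 0" by (rule Tj_high)
      with Tj_term[OF i] have "cg (Suc n) (fps_X^i * (fps_X^2)^(c2 i) * gb (fps_X^2) n i) 0" by (rule cg_trans)
      then show ?thesis using False by simp
    qed
  qed
  have JJsub: "JJ n \<subseteq> {..n}" unfolding JJ_def by auto
  have "(\<Sum>i\<le>n. if i = 0 \<or> i \<in> JJ n then Tj i else 0) = (\<Sum>i\<in>{i\<in>{..n}. i = 0 \<or> i \<in> JJ n}. Tj i)"
    by (rule sum.inter_filter[symmetric]) simp
  also have "{i\<in>{..n}. i = 0 \<or> i \<in> JJ n} = insert 0 (JJ n)" using JJsub by auto
  also have "(\<Sum>i\<in>insert 0 (JJ n). Tj i) = Tj 0 + (\<Sum>i\<in>JJ n. Tj i)"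
    by (rule sum.insert) (use finite_subset[OF JJsub] in \<open>auto simp: JJ_def\<close>)
  also have "Tj 0 = 1" by (simp add: Tj_def)
  finally have e: "(\<Sum>i\<le>n. if i = 0 \<or> i \<in> JJ n then Tj i else 0) = 1 + (\<Sum>i\<in>JJ n. Tj i)" .
  have "cg (Suc n) (1 + (\<Sum>i\<in>JJ n. Tj i)) (PX (Od n))"
    using cg_trans[OF cg_sym[OF c2] c1] unfolding e .
  then have "cg (Suc n) (1 + (1 + (\<Sum>i\<in>JJ n. Tj i))) (1 + PX (Od n))" by (rule cg_add[OF cg_refl])
  then show ?thesis by (simp add: add.assoc[symmetric] add.commute)
qed

lemma c11_main: "(of_nat (c11 n) :: bit) = (Phi n ^ 2) $ n + (Phi n ^ 3) $ n"
proof -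
  let ?O = "PX (Od n)" and ?E = "PX (Evn n)"
  have a1: "cg (Suc n) (\<Sum>j\<in>JJ n. (\<Prod>k\<in>{1..n}. gfk (Aj j) k :: bf)) (\<Sum>j\<in>JJ n. Og n * ?E * Tj j)"
  proof (rule cg_sum)
    fix j assume j: "j \<in> JJ n"
    then have "1 \<le> j" unfolding JJ_def by simp
    have "cg (Suc n) (fps_X^(j*j) * Og n * PX (HiE n j)) (fps_X^(j*j) * Og n * (?E * inverse (Pq (fps_X^2 :: bf) j)))"
      by (rule cg_mult[OF cg_refl HiE_cg[OF \<open>1 \<le> j\<close>]])
    then show "cg (Suc n) (\<Prod>k\<in>{1..n}. gfk (Aj j) k :: bf) (Og n * ?E * Tj j)"
      unfolding Gj[OF j] Tj_def by (simp add: mult_ac)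
  qed
  have a2: "(\<Sum>j\<in>JJ n. Og n * ?E * Tj j) = Og n * ?E * (\<Sum>j\<in>JJ n. Tj j)"
    by (simp add: sum_distrib_left)
  have a3: "cg (Suc n) (Og n * ?E * (\<Sum>j\<in>JJ n. Tj j)) (Og n * ?E * (?O + 1))"
    by (rule cg_mult[OF cg_refl euler_cg])
  have a4: "Og n * ?E * (?O + 1) = ?E + Og n * ?E"
    using Og_O[of n] by (simp add: algebra_simps)
  have A: "cg (Suc n) (\<Sum>j\<in>JJ n. (\<Prod>k\<in>{1..n}. gfk (Aj j) k :: bf)) (?E + Og n * ?E)"
    using cg_trans[OF a1[unfolded a2] a3] unfolding a4 .
  have B: "cg (Suc n) ?E (Phi n ^ 2)" by (rule Evn_cg)
  have "Og n * Phi n = ?E" using Og_O[of n] by (simp add: Phi_split mult.assoc[symmetric])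
  have "cg (Suc n) (Og n * ?E) (Og n * Phi n ^ 2)" by (rule cg_mult[OF cg_refl B])
  also have "Og n * Phi n ^ 2 = ?E * Phi n"
    using \<open>Og n * Phi n = ?E\<close> by (simp add: power2_eq_square mult.assoc[symmetric])
  finally have "cg (Suc n) (Og n * ?E) (?E * Phi n)" .
  moreover have "cg (Suc n) (?E * Phi n) (Phi n ^ 2 * Phi n)" by (rule cg_mult[OF B cg_refl])
  ultimately have C0: "cg (Suc n) (Og n * ?E) (Phi n ^ 2 * Phi n)" by (rule cg_trans)
  have "Phi n ^ 2 * Phi n = Phi n ^ 3" by (simp add: power3_eq_cube power2_eq_square)
  then have C: "cg (Suc n) (Og n * ?E) (Phi n ^ 3)" using C0 by simp
  have "cg (Suc n) (\<Sum>j\<in>JJ n. (\<Prod>k\<in>{1..n}. gfk (Aj j) k :: bf)) (Phi n ^ 2 + Phi n ^ 3)"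
    using cg_trans[OF A cg_add[OF B C]] .
  then have "(\<Sum>j\<in>JJ n. (\<Prod>k\<in>{1..n}. gfk (Aj j) k :: bf)) $ n = (Phi n ^ 2 + Phi n ^ 3) $ n"
    by (rule cg_nth) simp
  then show ?thesis unfolding c11_gf by (simp add: fps_sum_nth)
qed


lemma par0:
  assumes m: "m mod 11 \<in> {5, 7, 9::nat}"
  shows "even (c11 m)"
proof -
  have "(Phi m ^ 2) $ m = 0"
    unfolding phi2_coeff using nt3[OF m] by simp
  moreover have "(Phi m ^ 3) $ m = 0"
    unfolding phi3_coeff using nt4[OF m] by simp
  ultimately have "(of_nat (c11 m) :: bit) = 0" by (simp add: c11_main)
  then have "even (of_nat (c11 m) :: bit)" by simp
  then show ?thesis by (simp only: even_of_nat_iff)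
qed

theorem mainTheorem12:
  fixes n :: nat
  shows "even (c11 (11 * n + 5)) \<and> even (c11 (11 * n + 7)) \<and> even (c11 (11 * n + 9))"
  by (intro conjI par0) simp_all


end
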